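(* Consider a POMDP with finite state space $\mathcal S$, finite observation space $\mathcal Y$, finite action space $\mathcal A$, transition kernel $P(s'\mid s,a)$, observation kernel $O(y'\mid s',a)$, reward $r\colon\mathcal S\times\mathcal A\to\mathbb R$, and discount $\gamma\in[0,1)$. Let $\mathcal Z$ be a finite set and $f\colon\mathcal Z\times\mathcal Y\times\mathcal A\to\mathcal Z$ a recurrent update, with agent state $Z_{t+1}=f(Z_t,Y_{t+1},A_t)$. Let the exploration policy $\pi_{\mathrm{expl}}\colon\mathcal Z\to\Delta(\mathcal A)$ (with $A_t\sim\pi_{\mathrm{expl}}(Z_t)$) be such that the Markov chain $\{(S_t,Y_t,Z_t,A_t)\}_{t\ge1}$ has a unique stationary distribution $\xi$ with $\xi(s,y,z,a)>0$ for all $(s,y,z,a)$. Consider the recurrent Q-learning iterates $$\widehat Q_{t+1}(Z_t,A_t)=\widehat Q_t(Z_t,A_t)+\alpha_t(Z_t,A_t)\big[R_t+\gamma\max_{\tilde a\in\mathcal A}\widehat Q_t(Z_{t+1},\tilde a)-\widehat Q_t(Z_t,A_t)\big],$$ where $R_t=r(S_t,A_t)$ and the learning rate is $\alpha_t(z,a)=\mathbb 1\{Z_t=z,A_t=a\}\big/\big(1+\sum_{\tau=0}^t\mathbb 1\{Z_\tau=z,A_\tau=a\}\big)$ (entries other than $(Z_t,A_t)$ are unchanged). Define $$r_\xi(z,a)=\sum_{s}r(s,a)\xi(s\mid z,a),\qquad P_\xi(z'\mid z,a)=\sum_s\xi(s\mid z,a)\sum_{s'}P(s'\mid s,a)\sum_{y'}O(y'\mid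 s',a)\mathbb 1\{z'=f(z,y',a)\},$$ and let $Q^\star_\xi$ be the unique fixed point of $$Q^\star_\xi(z,a)=r_\xi(z,a)+\gamma\sum_{z'\in\mathcal Z}P_\xi(z'\mid z,a)\max_{\tilde a\in\mathcal A}Q^\star_\xi(z',\tilde a).$$ Then $\widehat Q_t\to Q^\star_\xi$ almost surely. Therefore the greedy policies $\hat\pi_t(z)=\arg\max_a\widehat Q_t(z,a)$ converge to $\pi^\star_\xi(z)=\arg\max_aQ^\star_\xi(z,a)$ (arg-max ties broken by a fixed deterministic rule).
   Context: $\xi(s\mid z,a)=\xi(s,z,a)/\xi(z,a)$ denotes the conditional of the marginal of $\xi$ on $(s,z,a)$. $\Delta(\mathcal A)$ is the set of probability distributions on $\mathcal A$.
   Formalization: The greedy policies $\hat\pi_t(z)$ are claimed to converge to $\pi^\star_\xi(z)$ only at agent states z where $\arg\max_aQ^\star_\xi(z,a)$ consists of a single action, while $\widehat Q_t\to Q^\star_\xi$ almost surely holds without restriction. Apart from conventions, each condition added here is assumed in the paper as well or is needed for the statement above to hold. *)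

theory Defs
  imports "HOL-Probability.Probability"
begin

definition chain_kernel ::
  "('s \<Rightarrow> 'a \<Rightarrow> 's pmf) \<Rightarrow> ('s \<Rightarrow> 'a \<Rightarrow> 'y pmf) \<Rightarrow> ('z \<Rightarrow> 'y \<Rightarrow> 'a \<Rightarrow> 'z)
   \<Rightarrow> ('z \<Rightarrow> 'a pmf) \<Rightarrow> 's \<times> 'y \<times> 'z \<times> 'a \<Rightarrow> ('s \<times> 'y \<times> 'z \<times> 'a) pmf" where
  "chain_kernel P Obs f pol = (\<lambda>(s, y, z, a).
     bind_pmf (P s a) (\<lambda>s'. bind_pmf (Obs s' a) (\<lambda>y'.
       map_pmf (\<lambda>a'. (s', y', f z y' a, a')) (pol (f z y' a)))))"

definition cond_s :: "('s::finite \<times> 'y::finite \<times> 'z \<times> 'a) pmf \<Rightarrow> 's \<Rightarrow> 'z \<Rightarrow> 'a \<Rightarrow> real" where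
  "cond_s \<xi> s z a =
     (\<Sum>y\<in>UNIV. pmf \<xi> (s, y, z, a)) / (\<Sum>s'\<in>UNIV. \<Sum>y\<in>UNIV. pmf \<xi> (s', y, z, a))"

definition r_xi :: "('s::finite \<Rightarrow> 'a \<Rightarrow> real) \<Rightarrow> ('s \<times> 'y::finite \<times> 'z \<times> 'a) pmf \<Rightarrow> 'z \<Rightarrow> 'a \<Rightarrow> real" where
  "r_xi r \<xi> z a = (\<Sum>s\<in>UNIV. r s a * cond_s \<xi> s z a)"

definition P_xi ::
  "('s::finite \<Rightarrow> 'a \<Rightarrow> 's pmf) \<Rightarrow> ('s \<Rightarrow> 'a \<Rightarrow> 'y::finite pmf) \<Rightarrow> ('z \<Rightarrow> 'y \<Rightarrow> 'a \<Rightarrow> 'z)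
   \<Rightarrow> ('s \<times> 'y \<times> 'z \<times> 'a) pmf \<Rightarrow> 'z \<Rightarrow> 'z \<Rightarrow> 'a \<Rightarrow> real" where
  "P_xi P Obs f \<xi> z' z a =
     (\<Sum>s\<in>UNIV. cond_s \<xi> s z a * (\<Sum>s'\<in>UNIV. pmf (P s a) s' *
        (\<Sum>y'\<in>UNIV. pmf (Obs s' a) y' * (if z' = f z y' a then 1 else 0))))"

definition max_q :: "('z \<Rightarrow> 'a::finite \<Rightarrow> real) \<Rightarrow> 'z \<Rightarrow> real" where
  "max_q Q z = Max (range (Q z))"

definition trS :: "(nat \<Rightarrow> 's \<times> 'y \<times> 'z \<times> 'a) \<Rightarrow> nat \<Rightarrow> 's" where
  "trS x t = fst (x t)"
definition trZ :: "(nat \<Rightarrow> 's \<times> 'y \<times> 'z \<times> 'a) \<Rightarrow> nat \<Rightarrow> 'z" where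
  "trZ x t = fst (snd (snd (x t)))"
definition trA :: "(nat \<Rightarrow> 's \<times> 'y \<times> 'z \<times> 'a) \<Rightarrow> nat \<Rightarrow> 'a" where
  "trA x t = snd (snd (snd (x t)))"

definition lrate :: "(nat \<Rightarrow> 's \<times> 'y \<times> 'z \<times> 'a) \<Rightarrow> nat \<Rightarrow> 'z \<Rightarrow> 'a \<Rightarrow> real" where
  "lrate x t z a =
     (if trZ x t = z \<and> trA x t = a then 1 else 0) /
     (1 + (\<Sum>\<tau>\<in>{0..t}. if trZ x \<tau> = z \<and> trA x \<tau> = a then 1 else 0))"

text \<open>Recurrent Q-learning iterates along a trajectory x, from initial table Q0.
  Since alpha_t vanishes off (Z_t, A_t), other entries are unchanged.\<close>
primrec qlearn ::
  "('s \<Rightarrow> 'a::finite \<Rightarrow> real) \<Rightarrow> real \<Rightarrow> ('z \<Rightarrow> 'a \<Rightarrow> real) \<Rightarrow> (nat \<Rightarrow> 's \<times> 'y \<times> 'z \<times> 'a)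
   \<Rightarrow> nat \<Rightarrow> 'z \<Rightarrow> 'a \<Rightarrow> real" where
  "qlearn r \<gamma> Q0 x 0 = Q0"
| "qlearn r \<gamma> Q0 x (Suc t) =
     (let Q = qlearn r \<gamma> Q0 x t in
      (\<lambda>z a. Q z a + lrate x t z a *
         (r (trS x t) (trA x t) + \<gamma> * max_q Q (trZ x (Suc t)) - Q z a)))"

definition greedy :: "('a set \<Rightarrow> 'a) \<Rightarrow> ('z \<Rightarrow> 'a::finite \<Rightarrow> real) \<Rightarrow> 'z \<Rightarrow> 'a" where
  "greedy sel Q z = sel {a. Q z a = max_q Q z}"

end

theory Submission
  imports Defs
begin

lemma sum_PiE_Suc:
  fixes F :: "(nat \<Rightarrow> 'x::finite) \<Rightarrow> real"
  shows "(\<Sum>xs\<in>PiE {..Suc n} (\<lambda>_. UNIV). F xs) = (\<Sum>xs\<in>PiE {..n} (\<lambda>_. UNIV). \<Sum>y\<in>UNIV. F (xs(Suc n := y)))"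
proof -
  have "(\<Sum>xs\<in>PiE {..Suc n} (\<lambda>_. UNIV). F xs) = (\<Sum>xs\<in>PiE (insert (Suc n) {..n}) (\<lambda>_. UNIV). F xs)"
    by (simp add: atMost_Suc)
  also have "\<dots> = (\<Sum>p\<in>UNIV \<times> PiE {..n} (\<lambda>_. UNIV). F ((\<lambda>(y, g). g(Suc n := y)) p))"
    unfolding PiE_insert_eq
    by (subst sum.reindex) (auto intro!: inj_combinator)
  also have "\<dots> = (\<Sum>y\<in>UNIV. \<Sum>xs\<in>PiE {..n} (\<lambda>_. UNIV). F (xs(Suc n := y)))"
    by (simp add: sum.cartesian_product case_prod_beta)
  also have "\<dots> = (\<Sum>xs\<in>PiE {..n} (\<lambda>_. UNIV). \<Sum>y\<in>UNIV. F (xs(Suc n := y)))"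
    by (rule sum.swap)
  finally show ?thesis .
qed

locale fmc = prob_space M for M :: "'m measure" +
  fixes X :: "nat \<Rightarrow> 'm \<Rightarrow> 'x::finite" and K :: "'x \<Rightarrow> 'x pmf" and mu0 :: "'x pmf"
  assumes Xmeas[measurable]: "\<And>i. X i \<in> measurable M (count_space UNIV)"
  and cyl: "\<And>n xs. measure M {\<omega>\<in>space M. \<forall>i\<le>n. X i \<omega> = xs i} =
      pmf mu0 (xs 0) * (\<Prod>i<n. pmf (K (xs i)) (xs (Suc i)))"
begin

definition C :: "nat \<Rightarrow> (nat \<Rightarrow> 'x) \<Rightarrow> 'm set" where
  "C n xs = {\<omega>\<in>space M. \<forall>i\<le>n. X i \<omega> = xs i}"

definition pp :: "nat \<Rightarrow> (nat \<Rightarrow> 'x) \<Rightarrow> real" where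
  "pp n xs = pmf mu0 (xs 0) * (\<Prod>i<n. pmf (K (xs i)) (xs (Suc i)))"

lemma C_sets[measurable]: "C n xs \<in> sets M"
  unfolding C_def by measurable

lemma measure_C: "measure M (C n xs) = pp n xs"
  unfolding C_def pp_def by (rule cyl)

lemma rep:
  fixes G :: "(nat \<Rightarrow> 'x) \<Rightarrow> real"
  assumes dep: "\<And>xs ys. (\<forall>i\<le>n. xs i = ys i) \<Longrightarrow> G xs = G ys"
    and w: "\<omega> \<in> space M"
  shows "G (\<lambda>i. X i \<omega>) = (\<Sum>xs\<in>PiE {..n} (\<lambda>_. UNIV). G xs * indicator (C n xs) \<omega>)"
proof -
  let ?x0 = "restrict (\<lambda>i. X i \<omega>) {..n}"
  have x0: "?x0 \<in> PiE {..n} (\<lambda>_. UNIV)" by auto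
  have iff: "\<omega> \<in> C n xs \<longleftrightarrow> xs = ?x0" if "xs \<in> PiE {..n} (\<lambda>_. UNIV)" for xs
    using that w unfolding C_def by (auto simp: PiE_def extensional_def fun_eq_iff)
  have "(\<Sum>xs\<in>PiE {..n} (\<lambda>_. UNIV). G xs * indicator (C n xs) \<omega>) =
        (\<Sum>xs\<in>PiE {..n} (\<lambda>_. UNIV). if xs = ?x0 then G xs else 0)"
    by (rule sum.cong) (auto simp: iff indicator_def)
  also have "\<dots> = G ?x0" using x0 by (subst sum.delta) (auto simp: finite_PiE)
  also have "\<dots> = G (\<lambda>i. X i \<omega>)" by (rule dep) auto
  finally show ?thesis by simp
qed

lemma G_meas:
  fixes G :: "(nat \<Rightarrow> 'x) \<Rightarrow> real"
  assumes dep: "\<And>xs ys. (\<forall>i\<le>n. xs i = ys i) \<Longrightarrow> G xs = G ys"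
  shows "(\<lambda>\<omega>. G (\<lambda>i. X i \<omega>)) \<in> borel_measurable M"
proof -
  have "(\<lambda>\<omega>. \<Sum>xs\<in>PiE {..n} (\<lambda>_. UNIV). G xs * indicator (C n xs) \<omega>) \<in> borel_measurable M"
    by measurable
  moreover have "(\<lambda>\<omega>. G (\<lambda>i. X i \<omega>)) \<in> borel_measurable M \<longleftrightarrow> (\<lambda>\<omega>. \<Sum>xs\<in>PiE {..n} (\<lambda>_. UNIV). G xs * indicator (C n xs) \<omega>) \<in> borel_measurable M"
    by (rule measurable_cong) (rule rep[OF dep])
  ultimately show ?thesis by simp
qed

lemma G_integrable:
  fixes G :: "(nat \<Rightarrow> 'x) \<Rightarrow> real"
  assumes dep: "\<And>xs ys. (\<forall>i\<le>n. xs i = ys i) \<Longrightarrow> G xs = G ys"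
  shows "integrable M (\<lambda>\<omega>. G (\<lambda>i. X i \<omega>))"
proof -
  have "integrable M (\<lambda>\<omega>. \<Sum>xs\<in>PiE {..n} (\<lambda>_. UNIV). G xs * indicator (C n xs) \<omega>)"
    by (intro Bochner_Integration.integrable_sum integrable_mult_right integrable_real_indicator C_sets) (simp add: less_top[symmetric])
  moreover have "integrable M (\<lambda>\<omega>. G (\<lambda>i. X i \<omega>)) \<longleftrightarrow> integrable M (\<lambda>\<omega>. \<Sum>xs\<in>PiE {..n} (\<lambda>_. UNIV). G xs * indicator (C n xs) \<omega>)"
    by (rule Bochner_Integration.integrable_cong) (auto intro: rep[OF dep])
  ultimately show ?thesis by simp
qed

lemma G_integral:
  fixes G :: "(nat \<Rightarrow> 'x) \<Rightarrow> real"
  assumes dep: "\<And>xs ys. (\<forall>i\<le>n. xs i = ys i) \<Longrightarrow> G xs = G ys"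
  shows "integral\<^sup>L M (\<lambda>\<omega>. G (\<lambda>i. X i \<omega>)) = (\<Sum>xs\<in>PiE {..n} (\<lambda>_. UNIV). G xs * pp n xs)"
proof -
  have "integral\<^sup>L M (\<lambda>\<omega>. G (\<lambda>i. X i \<omega>)) =
     integral\<^sup>L M (\<lambda>\<omega>. \<Sum>xs\<in>PiE {..n} (\<lambda>_. UNIV). G xs * indicator (C n xs) \<omega>)"
    by (rule Bochner_Integration.integral_cong) (auto intro: rep[OF dep])
  also have "\<dots> = (\<Sum>xs\<in>PiE {..n} (\<lambda>_. UNIV). G xs * measure M (C n xs))"
    by (subst Bochner_Integration.integral_sum) (auto intro!: integrable_mult_right integrable_real_indicator simp: less_top[symmetric])
  finally show ?thesis by (simp add: measure_C)
qed

lemma pp_Suc: "xs \<in> PiE {..n} (\<lambda>_. UNIV) \<Longrightarrow>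
  pp (Suc n) (xs(Suc n := y)) = pp n xs * pmf (K (xs n)) y"
  unfolding pp_def by (auto intro!: prod.cong simp: prod.lessThan_Suc)

lemma martingale:
  fixes G :: "(nat \<Rightarrow> 'x) \<Rightarrow> real"
  assumes dep: "\<And>xs ys. (\<forall>i\<le>n. xs i = ys i) \<Longrightarrow> G xs = G ys"
    and zero: "\<And>x. (\<Sum>y\<in>UNIV. pmf (K x) y * \<psi> x y) = 0"
  shows "integral\<^sup>L M (\<lambda>\<omega>. G (\<lambda>i. X i \<omega>) * \<psi> (X n \<omega>) (X (Suc n) \<omega>)) = 0"
proof -
  have dep2: "(\<lambda>xs. G xs * \<psi> (xs n) (xs (Suc n))) xs = (\<lambda>xs. G xs * \<psi> (xs n) (xs (Suc n))) ys"
    if "\<forall>i\<le>Suc n. xs i = ys i" for xs ys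
    using that dep[of xs ys] by auto
  have "integral\<^sup>L M (\<lambda>\<omega>. G (\<lambda>i. X i \<omega>) * \<psi> (X n \<omega>) (X (Suc n) \<omega>)) =
    (\<Sum>xs\<in>PiE {..Suc n} (\<lambda>_. UNIV). G xs * \<psi> (xs n) (xs (Suc n)) * pp (Suc n) xs)"
    using G_integral[of "Suc n" "\<lambda>xs. G xs * \<psi> (xs n) (xs (Suc n))", OF dep2] by simp
  also have "\<dots> = (\<Sum>xs\<in>PiE {..n} (\<lambda>_. UNIV). \<Sum>y\<in>UNIV.
       G (xs(Suc n := y)) * \<psi> (xs n) y * pp (Suc n) (xs(Suc n := y)))"
    by (subst sum_PiE_Suc) simp
  also have "\<dots> = (\<Sum>xs\<in>PiE {..n} (\<lambda>_. UNIV). G xs * pp n xs * (\<Sum>y\<in>UNIV. pmf (K (xs n)) y * \<psi> (xs n) y))"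
  proof (rule sum.cong[OF refl])
    fix xs :: "nat \<Rightarrow> 'x" assume xs: "xs \<in> PiE {..n} (\<lambda>_. UNIV)"
    have "G (xs(Suc n := y)) = G xs" for y :: 'x by (rule dep) auto
    then show "(\<Sum>y\<in>UNIV. G (xs(Suc n := y)) * \<psi> (xs n) y * pp (Suc n) (xs(Suc n := y))) =
      G xs * pp n xs * (\<Sum>y\<in>UNIV. pmf (K (xs n)) y * \<psi> (xs n) y)"
      by (simp add: pp_Suc[OF xs] sum_distrib_left mult_ac)
  qed
  also have "\<dots> = 0" by (simp add: zero)
  finally show ?thesis .
qed

end

context fmc begin

definition Sm :: "('x \<Rightarrow> 'x \<Rightarrow> real) \<Rightarrow> nat \<Rightarrow> 'm \<Rightarrow> real" where
  "Sm \<psi> n \<omega> = (\<Sum>\<tau><n. \<psi> (X \<tau> \<omega>) (X (Suc \<tau>) \<omega>))"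

lemma Sm_Suc: "Sm \<psi> (Suc n) \<omega> = Sm \<psi> n \<omega> + \<psi> (X n \<omega>) (X (Suc n) \<omega>)"
  unfolding Sm_def by simp

lemma SD_integrable: "integrable M (\<lambda>\<omega>. Sm \<psi> n \<omega> ^ k * \<psi> (X n \<omega>) (X (Suc n) \<omega>) ^ j)"
proof -
  have "integrable M (\<lambda>\<omega>. (\<lambda>xs. (\<Sum>\<tau><n. \<psi> (xs \<tau>) (xs (Suc \<tau>))) ^ k * \<psi> (xs n) (xs (Suc n)) ^ j) (\<lambda>i. X i \<omega>))"
    by (rule G_integrable[where n="Suc n"]) (auto intro!: sum.cong)
  then show ?thesis unfolding Sm_def by simp
qed

lemma S_integrable: "integrable M (\<lambda>\<omega>. Sm \<psi> n \<omega> ^ k)"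
  using SD_integrable[of \<psi> n k 0] by simp

lemma SD_zero:
  assumes zero: "\<And>x. (\<Sum>y\<in>UNIV. pmf (K x) y * \<psi> x y) = 0"
  shows "integral\<^sup>L M (\<lambda>\<omega>. Sm \<psi> n \<omega> ^ k * \<psi> (X n \<omega>) (X (Suc n) \<omega>)) = 0"
proof -
  have "integral\<^sup>L M (\<lambda>\<omega>. (\<lambda>xs. (\<Sum>\<tau><n. \<psi> (xs \<tau>) (xs (Suc \<tau>))) ^ k) (\<lambda>i. X i \<omega>) * \<psi> (X n \<omega>) (X (Suc n) \<omega>)) = 0"
    by (rule martingale[OF _ zero]) (auto intro!: sum.cong)
  then show ?thesis unfolding Sm_def by simp
qed

lemma Sm_bound:
  assumes c: "\<And>x y. \<bar>\<psi> x y\<bar> \<le> c"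
  shows "\<bar>Sm \<psi> n \<omega>\<bar> \<le> n * c"
proof -
  have "\<bar>Sm \<psi> n \<omega>\<bar> \<le> (\<Sum>\<tau><n. \<bar>\<psi> (X \<tau> \<omega>) (X (Suc \<tau>) \<omega>)\<bar>)"
    unfolding Sm_def by (rule sum_abs)
  also have "\<dots> \<le> (\<Sum>\<tau><n. c)" by (rule sum_mono) (rule c)
  finally show ?thesis by simp
qed

lemma second_moment:
  assumes zero: "\<And>x. (\<Sum>y\<in>UNIV. pmf (K x) y * \<psi> x y) = 0"
    and c: "\<And>x y. \<bar>\<psi> x y\<bar> \<le> c"
  shows "integral\<^sup>L M (\<lambda>\<omega>. Sm \<psi> n \<omega> ^ 2) \<le> n * c^2"
proof (induction n)
  case 0
  then show ?case by (simp add: Sm_def)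
next
  case (Suc n)
  let ?S = "\<lambda>\<omega>. Sm \<psi> n \<omega>" and ?D = "\<lambda>\<omega>. \<psi> (X n \<omega>) (X (Suc n) \<omega>)"
  have eq: "Sm \<psi> (Suc n) \<omega> ^ 2 = ?S \<omega> ^ 2 + (2 * (?S \<omega> ^ 1 * ?D \<omega>) + ?S \<omega> ^ 0 * ?D \<omega> ^ 2)" for \<omega>
    by (simp add: Sm_Suc power2_eq_square algebra_simps)
  have i1: "integrable M (\<lambda>\<omega>. ?S \<omega> ^ 1 * ?D \<omega>)" using SD_integrable[of \<psi> n 1 1] by simp
  have i2: "integrable M (\<lambda>\<omega>. ?S \<omega> ^ 0 * ?D \<omega> ^ 2)" using SD_integrable[of \<psi> n 0 2] by simp
  have "integral\<^sup>L M (\<lambda>\<omega>. Sm \<psi> (Suc n) \<omega> ^ 2) =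
      integral\<^sup>L M (\<lambda>\<omega>. ?S \<omega> ^ 2) + (2 * integral\<^sup>L M (\<lambda>\<omega>. ?S \<omega> ^ 1 * ?D \<omega>) + integral\<^sup>L M (\<lambda>\<omega>. ?S \<omega> ^ 0 * ?D \<omega> ^ 2))"
    unfolding eq
    using S_integrable i1 i2
    by (simp add: Bochner_Integration.integral_add Bochner_Integration.integral_mult_right del: power_one_right power_0)
  also have "integral\<^sup>L M (\<lambda>\<omega>. ?S \<omega> ^ 1 * ?D \<omega>) = 0" by (rule SD_zero[OF zero])
  also have "integral\<^sup>L M (\<lambda>\<omega>. ?S \<omega> ^ 0 * ?D \<omega> ^ 2) \<le> integral\<^sup>L M (\<lambda>\<omega>. c^2)"
  proof (rule Bochner_Integration.integral_mono[OF i2])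
    fix \<omega> show "?S \<omega> ^ 0 * ?D \<omega> ^ 2 \<le> c^2"
      using c[of "X n \<omega>" "X (Suc n) \<omega>"] by (simp add: abs_le_square_iff[symmetric])
  qed simp
  finally show ?case using Suc.IH by (simp add: algebra_simps prob_space)
qed

lemma fourth_moment:
  assumes zero: "\<And>x. (\<Sum>y\<in>UNIV. pmf (K x) y * \<psi> x y) = 0"
    and c: "\<And>x y. \<bar>\<psi> x y\<bar> \<le> c"
  shows "integral\<^sup>L M (\<lambda>\<omega>. Sm \<psi> n \<omega> ^ 4) \<le> 11 * c^4 * (real n)^2"
proof (induction n)
  case 0
  then show ?case by (simp add: Sm_def)
next
  case (Suc n)
  have c0: "0 \<le> c" using c[of undefined undefined] by simp
  let ?S = "\<lambda>\<omega>. Sm \<psi> n \<omega>" and ?D = "\<lambda>\<omega>. \<psi> (X n \<omega>) (X (Suc n) \<omega>)"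
  define F where "F k j = (\<lambda>\<omega>. ?S \<omega> ^ k * ?D \<omega> ^ j)" for k j :: nat
  have eq: "Sm \<psi> (Suc n) \<omega> ^ 4 = F 4 0 \<omega> + (4 * F 3 1 \<omega> + (6 * F 2 2 \<omega>
     + (4 * F 1 3 \<omega> + F 0 4 \<omega>)))" for \<omega>
    unfolding F_def by (simp add: Sm_Suc power2_eq_square power3_eq_cube power4_eq_xxxx algebra_simps)
  have I: "integrable M (\<lambda>\<omega>. ?S \<omega> ^ k * ?D \<omega> ^ j)" for k j using SD_integrable[of \<psi> n k j] by simp
  have IF: "integrable M (F k j)" for k j unfolding F_def by (rule I)
  have split: "integral\<^sup>L M (\<lambda>\<omega>. Sm \<psi> (Suc n) \<omega> ^ 4) =
      integral\<^sup>L M (F 4 0) + (4 * integral\<^sup>L M (F 3 1) +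
      (6 * integral\<^sup>L M (F 2 2) +
      (4 * integral\<^sup>L M (F 1 3) + integral\<^sup>L M (F 0 4))))"
    unfolding eq
    using IF
    by (simp add: Bochner_Integration.integral_add Bochner_Integration.integral_mult_right)
  have b40: "integral\<^sup>L M (F 4 0) = integral\<^sup>L M (\<lambda>\<omega>. ?S \<omega> ^ 4)" unfolding F_def by simp
  have b31: "integral\<^sup>L M (F 3 1) = 0" unfolding F_def using SD_zero[OF zero, of n 3] by simp
  have "integral\<^sup>L M (F 2 2) \<le> integral\<^sup>L M (\<lambda>\<omega>. c^2 * ?S \<omega> ^ 2)"
  proof (rule Bochner_Integration.integral_mono[OF IF])
    fix \<omega>
    have "?D \<omega> ^ 2 \<le> c^2" using c[of "X n \<omega>" "X (Suc n) \<omega>"] c0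
      by (simp add: abs_le_square_iff[symmetric])
    from mult_left_mono[OF this, of "?S \<omega> ^ 2"]
    show "F 2 2 \<omega> \<le> c^2 * ?S \<omega> ^ 2" unfolding F_def by (simp add: mult.commute)
  qed (use S_integrable in simp)
  also have "\<dots> = c^2 * integral\<^sup>L M (\<lambda>\<omega>. ?S \<omega> ^ 2)" by simp
  also have "\<dots> \<le> c^2 * (n * c^2)" by (rule mult_left_mono[OF second_moment[OF zero c]]) simp
  finally have b22: "integral\<^sup>L M (F 2 2) \<le> n * c^4" by (simp add: power4_eq_xxxx power2_eq_square algebra_simps)
  have "integral\<^sup>L M (F 1 3) \<le> integral\<^sup>L M (\<lambda>\<omega>. n * c^4)"
  proof (rule Bochner_Integration.integral_mono[OF IF])
    fix \<omega>
    have "?S \<omega> ^ 1 * ?D \<omega> ^ 3 \<le> \<bar>?S \<omega>\<bar> * \<bar>?D \<omega>\<bar> ^ 3"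
      by (metis abs_ge_self abs_mult power_abs power_one_right)
    also have "\<dots> \<le> (n * c) * c ^ 3"
      by (intro mult_mono power_mono Sm_bound c) (use c0 in auto)
    finally show "F 1 3 \<omega> \<le> n * c^4" unfolding F_def by (simp add: power4_eq_xxxx power3_eq_cube algebra_simps)
  qed simp
  then have b13: "integral\<^sup>L M (F 1 3) \<le> n * c^4" by (simp add: prob_space)
  have "integral\<^sup>L M (F 0 4) \<le> integral\<^sup>L M (\<lambda>\<omega>. c^4)"
  proof (rule Bochner_Integration.integral_mono[OF IF])
    fix \<omega>
    have "?D \<omega> ^ 4 = \<bar>?D \<omega>\<bar> ^ 4" by (simp add: power_even_abs)
    also have "\<dots> \<le> c^4" by (intro power_mono c) simp
    finally show "F 0 4 \<omega> \<le> c^4" unfolding F_def by simp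
  qed simp
  then have b04: "integral\<^sup>L M (F 0 4) \<le> c^4" by (simp add: prob_space)
  have q0: "0 \<le> c^4" "0 \<le> real n * c^4" using c0 by simp_all
  have key: "11 * c^4 * (real (Suc n))^2 = 11 * c^4 * (real n)^2 + 22 * (real n * c^4) + 11 * c^4"
    by (simp add: power2_eq_square algebra_simps)
  show ?case using split b40 b31 b22 b13 b04 q0 key Suc.IH by linarith
qed

end

context fmc begin

lemma Sm_meas[measurable]: "(\<lambda>\<omega>. Sm \<psi> n \<omega>) \<in> borel_measurable M"
  using S_integrable[of \<psi> n 1] by (simp add: borel_measurable_integrable)

lemma slln_eps:
  fixes e :: real
  assumes zero: "\<And>x. (\<Sum>y\<in>UNIV. pmf (K x) y * \<psi> x y) = 0"
    and c: "\<And>x y. \<bar>\<psi> x y\<bar> \<le> c"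
    and e: "0 < e"
  shows "AE \<omega> in M. eventually (\<lambda>n. \<bar>Sm \<psi> (Suc n) \<omega>\<bar> < e * Suc n) sequentially"
proof -
  define A where "A n = {\<omega>\<in>space M. (e * Suc n)^4 \<le> Sm \<psi> (Suc n) \<omega> ^ 4}" for n
  have A_sets[measurable]: "A n \<in> sets M" for n unfolding A_def by measurable
  have mA: "measure M (A n) \<le> (11 * c^4 / e^4) * inverse (real (Suc n) ^ 2)" for n
  proof -
    have pos: "0 < (e * Suc n)^4" using e by simp
    have "measure M (A n) \<le> integral\<^sup>L M (\<lambda>\<omega>. Sm \<psi> (Suc n) \<omega> ^ 4) / (e * Suc n)^4"
      unfolding A_def
      by (rule integral_Markov_inequality_measure[where A="space M"])
         (use e in \<open>auto intro: S_integrable\<close>)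
    also have "\<dots> \<le> 11 * c^4 * (real (Suc n))^2 / (e * Suc n)^4"
      by (rule divide_right_mono[OF fourth_moment[OF zero c]]) (use pos in simp)
    also have "\<dots> = (11 * c^4 / e^4) * inverse (real (Suc n) ^ 2)"
    proof -
      have gen: "11 * c^4 * m^2 / (e * m)^4 = (11 * c^4 / e^4) * inverse (m ^ 2)" if "0 < m" for m :: real
        using that e by (simp add: field_simps power_mult_distrib power2_eq_square power4_eq_xxxx)
      show ?thesis by (rule gen) simp
    qed
    finally show ?thesis .
  qed
  have sum1: "summable (\<lambda>n. inverse (real (Suc n) ^ 2))"
    using inverse_power_summable[of 2, where 'a=real] summable_Suc_iff[of "\<lambda>n. inverse (real n ^ 2)"]
    by simp
  have summ: "summable (\<lambda>n. measure M (A n))"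
    by (rule summable_comparison_test[OF _ summable_mult[OF sum1, of "11 * c^4 / e^4"]])
       (use mA in auto)
  have "AE \<omega> in M. eventually (\<lambda>n. \<omega> \<in> space M - A n) sequentially"
    by (rule borel_cantelli_AE1[OF A_sets _ summ]) (simp add: less_top[symmetric])
  then show ?thesis
  proof (rule AE_mp, intro AE_I2 impI)
    fix \<omega> assume w: "\<omega> \<in> space M" and ev: "eventually (\<lambda>n. \<omega> \<in> space M - A n) sequentially"
    show "eventually (\<lambda>n. \<bar>Sm \<psi> (Suc n) \<omega>\<bar> < e * Suc n) sequentially"
      using ev
    proof (rule eventually_mono)
      fix n assume "\<omega> \<in> space M - A n"
      then have lt: "Sm \<psi> (Suc n) \<omega> ^ 4 < (e * Suc n)^4" using w unfolding A_def by auto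
      show "\<bar>Sm \<psi> (Suc n) \<omega>\<bar> < e * Suc n"
      proof (rule ccontr)
        assume "\<not> \<bar>Sm \<psi> (Suc n) \<omega>\<bar> < e * Suc n"
        then have "e * Suc n \<le> \<bar>Sm \<psi> (Suc n) \<omega>\<bar>" by simp
        then have "(e * Suc n)^4 \<le> \<bar>Sm \<psi> (Suc n) \<omega>\<bar>^4" by (rule power_mono) (use e in simp)
        then show False using lt by (simp add: power_even_abs)
      qed
    qed
  qed
qed

lemma slln:
  assumes zero: "\<And>x. (\<Sum>y\<in>UNIV. pmf (K x) y * \<psi> x y) = 0"
    and c: "\<And>x y. \<bar>\<psi> x y\<bar> \<le> c"
  shows "AE \<omega> in M. (\<lambda>n. Sm \<psi> n \<omega> / n) \<longlonglongrightarrow> 0"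
proof -
  have "AE \<omega> in M. \<forall>k::nat. eventually (\<lambda>n. \<bar>Sm \<psi> (Suc n) \<omega>\<bar> < inverse (real (Suc k)) * Suc n) sequentially"
  proof (subst AE_all_countable, rule allI)
    fix k :: nat
    show "AE \<omega> in M. eventually (\<lambda>n. \<bar>Sm \<psi> (Suc n) \<omega>\<bar> < inverse (real (Suc k)) * Suc n) sequentially"
      by (rule slln_eps[OF zero c]) (simp del: of_nat_Suc)
  qed
  then show ?thesis
  proof (rule AE_mp, intro AE_I2 impI)
    fix \<omega> assume H: "\<forall>k::nat. eventually (\<lambda>n. \<bar>Sm \<psi> (Suc n) \<omega>\<bar> < inverse (real (Suc k)) * Suc n) sequentially"
    show "(\<lambda>n. Sm \<psi> n \<omega> / n) \<longlonglongrightarrow> 0"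
    proof (rule LIMSEQ_I)
      fix r :: real assume r: "0 < r"
      obtain k where k: "inverse (real (Suc k)) < r" using reals_Archimedean[OF r] by blast
      obtain N where N: "\<And>n. n \<ge> N \<Longrightarrow> \<bar>Sm \<psi> (Suc n) \<omega>\<bar> < inverse (real (Suc k)) * Suc n"
        using H[rule_format, of k] unfolding eventually_sequentially by blast
      show "\<exists>no. \<forall>n\<ge>no. norm (Sm \<psi> n \<omega> / n - 0) < r"
      proof (intro exI allI impI)
        fix n assume n: "Suc N \<le> n"
        then obtain m where m: "n = Suc m" "m \<ge> N" by (cases n) auto
        have "\<bar>Sm \<psi> n \<omega>\<bar> / n < inverse (real (Suc k))"
          using N[OF m(2)] m(1) by (simp add: divide_less_eq)
        then show "norm (Sm \<psi> n \<omega> / n - 0) < r" using k by simp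
      qed
    qed
  qed
qed

end

lemma dd: fixes h :: "'x::finite \<Rightarrow> 'y::finite \<Rightarrow> real"
  shows "(\<Sum>x0\<in>UNIV. \<Sum>y0\<in>UNIV. if x0 = a \<and> y0 = b then h x0 y0 else 0) = h a b"
proof -
  have "(\<Sum>x0\<in>UNIV. \<Sum>y0\<in>UNIV. if x0 = a \<and> y0 = b then h x0 y0 else 0) =
     (\<Sum>x0\<in>UNIV. if x0 = a then h x0 b else 0)"
    by (rule sum.cong[OF refl]) (auto simp: sum.delta)
  also have "\<dots> = h a b" by (simp add: sum.delta)
  finally show ?thesis .
qed

definition psi0 :: "('x \<Rightarrow> 'x pmf) \<Rightarrow> 'x \<Rightarrow> 'x \<Rightarrow> 'x \<Rightarrow> 'x \<Rightarrow> real" where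
  "psi0 K x0 y0 a b = (if a = x0 then (if b = y0 then 1 else 0) - pmf (K x0) y0 else 0)"

definition Aavg :: "(nat \<Rightarrow> 'x) \<Rightarrow> nat \<Rightarrow> 'x \<Rightarrow> real" where
  "Aavg x n y = (\<Sum>\<tau><n. if x \<tau> = y then 1 else 0) / n"

definition Bavg :: "(nat \<Rightarrow> 'x) \<Rightarrow> nat \<Rightarrow> 'x \<Rightarrow> 'x \<Rightarrow> real" where
  "Bavg x n x0 y0 = (\<Sum>\<tau><n. if x \<tau> = x0 \<and> x (Suc \<tau>) = y0 then 1 else 0) / n"

lemma psi0_zero:
  fixes K :: "'x::finite \<Rightarrow> 'x pmf"
  shows "(\<Sum>y\<in>UNIV. pmf (K x) y * psi0 K x0 y0 x y) = (0::real)"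
proof (cases "x = x0")
  case True
  have pw: "pmf (K x) y * psi0 K x0 y0 x y = (if y = y0 then pmf (K x0) y0 else 0) - pmf (K x0) y * pmf (K x0) y0" for y
    using True by (simp add: psi0_def algebra_simps)
  have "(\<Sum>y\<in>UNIV. pmf (K x) y * psi0 K x0 y0 x y) =
     (\<Sum>y\<in>UNIV. (if y = y0 then pmf (K x0) y0 else 0)) - (\<Sum>y\<in>UNIV. pmf (K x0) y) * pmf (K x0) y0"
    unfolding pw by (simp add: sum_subtractf sum_distrib_right)
  also have "(\<Sum>y\<in>UNIV. pmf (K x0) y) = 1" by (rule sum_pmf_eq_1) auto
  finally show ?thesis by simp
qed (simp add: psi0_def)

lemma psi0_bound: "\<bar>psi0 K x0 y0 a b\<bar> \<le> 1"
  unfolding psi0_def using pmf_le_1[of "K x0" y0] pmf_nonneg[of "K x0" y0] by auto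

context
  fixes x :: "nat \<Rightarrow> 'x::finite" and K :: "'x \<Rightarrow> 'x pmf" and \<xi> :: "'x pmf"
  assumes uniq: "\<forall>\<nu>. bind_pmf \<nu> K = \<nu> \<longrightarrow> \<nu> = \<xi>"
    and hyp: "\<And>x0 y0. (\<lambda>n. (\<Sum>\<tau><n. psi0 K x0 y0 (x \<tau>) (x (Suc \<tau>))) / n) \<longlonglongrightarrow> 0"
begin

lemma step1: "(\<lambda>n. Bavg x n x0 y0 - Aavg x n x0 * pmf (K x0) y0) \<longlonglongrightarrow> 0"
proof -
  have "(\<Sum>\<tau><n. psi0 K x0 y0 (x \<tau>) (x (Suc \<tau>))) / n = Bavg x n x0 y0 - Aavg x n x0 * pmf (K x0) y0" for n
  proof -
    have pw: "psi0 K x0 y0 (x \<tau>) (x (Suc \<tau>)) = (if x \<tau> = x0 \<and> x (Suc \<tau>) = y0 then 1 else 0) -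
        (if x \<tau> = x0 then 1 else 0) * pmf (K x0) y0" for \<tau>
      by (simp add: psi0_def)
    show ?thesis unfolding pw Bavg_def Aavg_def
      by (simp only: sum_subtractf sum_distrib_right[symmetric] diff_divide_distrib times_divide_eq_left)
  qed
  then show ?thesis using hyp[of x0 y0] by simp
qed

lemma step2: "(\<lambda>n. (\<Sum>x0\<in>UNIV. Bavg x n x0 y) - Aavg x n y) \<longlonglongrightarrow> 0"
proof -
  have eq: "(\<Sum>x0\<in>UNIV. Bavg x n x0 y) - Aavg x n y =
      ((if x n = y then 1 else 0) - (if x 0 = y then 1 else 0)) / n" for n
  proof -
    have "(\<Sum>x0\<in>UNIV. \<Sum>\<tau><n. if x \<tau> = x0 \<and> x (Suc \<tau>) = y then 1 else (0::real)) =
        (\<Sum>\<tau><n. \<Sum>x0\<in>UNIV. if x \<tau> = x0 \<and> x (Suc \<tau>) = y then 1 else (0::real))"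
      by (rule sum.swap)
    also have "\<dots> = (\<Sum>\<tau><n. if x (Suc \<tau>) = y then 1 else 0)"
      by (rule sum.cong) (auto simp: if_distrib[symmetric] sum.delta cong: if_cong)
    finally have "(\<Sum>x0\<in>UNIV. \<Sum>\<tau><n. if x \<tau> = x0 \<and> x (Suc \<tau>) = y then 1 else (0::real)) =
        (\<Sum>\<tau><n. if x (Suc \<tau>) = y then 1 else 0)" .
    moreover have "(\<Sum>\<tau><Suc n. if x \<tau> = y then 1 else (0::real)) =
        (if x 0 = y then 1 else 0) + (\<Sum>\<tau><n. if x (Suc \<tau>) = y then 1 else 0)"
      by (rule sum.lessThan_Suc_shift)
    moreover have "(\<Sum>\<tau><Suc n. if x \<tau> = y then 1 else (0::real)) =
        (\<Sum>\<tau><n. if x \<tau> = y then 1 else 0) + (if x n = y then 1 else 0)"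
      by simp
    ultimately show ?thesis unfolding Bavg_def Aavg_def
      by (simp add: sum_divide_distrib[symmetric] diff_divide_distrib[symmetric])
  qed
  have "(\<lambda>n. ((if x n = y then 1 else 0) - (if x 0 = y then 1 else 0)) / real n) \<longlonglongrightarrow> 0"
  proof (rule Lim_null_comparison[OF _ lim_inverse_n'[THEN tendsto_mult_left[of _ _ _ 2], simplified]])
    show "\<forall>\<^sub>F n in sequentially. norm (((if x n = y then 1 else 0) - (if x 0 = y then 1 else 0)) / real n) \<le> 2 / real n"
      by (intro always_eventually allI) (auto simp: divide_simps)
  qed
  then show ?thesis unfolding eq .
qed

lemma step3: "(\<lambda>n. Aavg x n y - (\<Sum>x0\<in>UNIV. Aavg x n x0 * pmf (K x0) y)) \<longlonglongrightarrow> 0"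
proof -
  have "(\<lambda>n. (\<Sum>x0\<in>UNIV. Bavg x n x0 y - Aavg x n x0 * pmf (K x0) y) - ((\<Sum>x0\<in>UNIV. Bavg x n x0 y) - Aavg x n y)) \<longlonglongrightarrow> 0 - 0"
    by (intro tendsto_diff step2 tendsto_null_sum step1)
  then show ?thesis by (simp add: sum_subtractf)
qed

lemma Aavg_nonneg: "0 \<le> Aavg x n y"
  unfolding Aavg_def by (intro divide_nonneg_nonneg sum_nonneg) auto

lemma Aavg_le1: "Aavg x n y \<le> 1"
proof (cases "n = 0")
  case False
  have "(\<Sum>\<tau><n. if x \<tau> = y then 1 else (0::real)) \<le> (\<Sum>\<tau><n. 1)" by (rule sum_mono) auto
  then show ?thesis using False unfolding Aavg_def by (simp add: divide_le_eq)
qed (simp add: Aavg_def)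

lemma Aavg_sum: "n > 0 \<Longrightarrow> (\<Sum>y\<in>UNIV. Aavg x n y) = 1"
proof -
  assume n: "n > 0"
  have "(\<Sum>y\<in>UNIV. \<Sum>\<tau><n. if x \<tau> = y then 1 else (0::real)) = (\<Sum>\<tau><n. \<Sum>y\<in>UNIV. if x \<tau> = y then 1 else (0::real))"
    by (rule sum.swap)
  also have "\<dots> = n" by simp
  finally show ?thesis using n unfolding Aavg_def by (simp add: sum_divide_distrib[symmetric])
qed

lemma stationary_limit:
  fixes \<nu> :: "'x \<Rightarrow> real"
  assumes nn: "\<And>y. 0 \<le> \<nu> y" and s1: "(\<Sum>y\<in>UNIV. \<nu> y) = 1"
    and st: "\<And>y. \<nu> y = (\<Sum>x0\<in>UNIV. \<nu> x0 * pmf (K x0) y)"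
  shows "\<nu> y = pmf \<xi> y"
proof -
  have prob: "(\<integral>\<^sup>+y. ennreal (\<nu> y) \<partial>count_space UNIV) = 1"
    by (simp add: nn_integral_count_space_finite sum_ennreal nn s1)
  define p where "p = embed_pmf \<nu>"
  have pp: "pmf p y = \<nu> y" for y unfolding p_def by (rule pmf_embed_pmf[OF nn prob])
  have "bind_pmf p K = p"
  proof (rule pmf_eqI)
    fix y
    have "pmf (bind_pmf p K) y = (\<integral>x0. pmf (K x0) y \<partial>measure_pmf p)" by (rule pmf_bind)
    also have "\<dots> = (\<Sum>x0\<in>UNIV. pmf (K x0) y * pmf p x0)" by (rule integral_measure_pmf_real) auto
    also have "\<dots> = \<nu> y" using st[of y] by (simp add: pp mult.commute)
    finally show "pmf (bind_pmf p K) y = pmf p y" by (simp add: pp)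
  qed
  then have "p = \<xi>" using uniq by blast
  then show ?thesis using pp by simp
qed

lemma step4: "(\<lambda>n. Aavg x n y) \<longlonglongrightarrow> pmf \<xi> y"
proof -
  define a where "a n = (\<chi> z. Aavg x n z)" for n
  define \<xi>v where "\<xi>v = (\<chi> z. pmf \<xi> z)"
  have bnd: "bounded (range a)"
  proof -
    have "norm (a n) \<le> real CARD('x)" for n
    proof -
      have "norm (a n) \<le> (\<Sum>z\<in>UNIV. \<bar>a n $ z\<bar>)" by (rule norm_le_l1_cart)
      also have "\<dots> \<le> (\<Sum>z\<in>(UNIV::'x set). (1::real))" unfolding a_def
        by (rule sum_mono) (use Aavg_nonneg Aavg_le1 in \<open>auto simp: abs_le_iff\<close>)
      finally show ?thesis by simp
    qed
    then show ?thesis unfolding bounded_iff by blast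
  qed
  have "a \<longlonglongrightarrow> \<xi>v"
  proof (rule metric_LIMSEQ_I, rule ccontr)
    fix r :: real assume r: "r > 0" and nex: "\<not> (\<exists>no. \<forall>n\<ge>no. dist (a n) \<xi>v < r)"
    have "infinite {n. r \<le> dist (a n) \<xi>v}"
      unfolding infinite_nat_iff_unbounded_le using nex by (auto simp: not_less)
    from infinite_enumerate[OF this] obtain r0 :: "nat \<Rightarrow> nat"
      where r0: "strict_mono r0" "\<forall>n. r0 n \<in> {n. r \<le> dist (a n) \<xi>v}" by blast
    have "bounded (range (a \<circ> r0))" using bnd by (rule bounded_subset) auto
    from bounded_imp_convergent_subsequence[OF this] obtain l r1
      where r1: "strict_mono r1" and lim: "((a \<circ> r0) \<circ> r1) \<longlonglongrightarrow> l" by blast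
    define s where "s = r0 \<circ> r1"
    have s: "strict_mono s" unfolding s_def using r0(1) r1 by (rule strict_mono_o)
    have limc: "(\<lambda>k. Aavg x (s k) z) \<longlonglongrightarrow> l $ z" for z
      using tendsto_vec_nth[OF lim, of z] unfolding s_def a_def by (simp add: o_def)
    have nn: "0 \<le> l $ z" for z
      by (rule LIMSEQ_le_const[OF limc]) (use Aavg_nonneg in auto)
    have s1: "(\<Sum>z\<in>UNIV. l $ z) = 1"
    proof -
      have A: "(\<lambda>k. \<Sum>z\<in>UNIV. Aavg x (s k) z) \<longlonglongrightarrow> (\<Sum>z\<in>UNIV. l $ z)"
        by (intro tendsto_sum limc)
      have "eventually (\<lambda>k. (\<Sum>z\<in>UNIV. Aavg x (s k) z) = 1) sequentially"
        unfolding eventually_sequentially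
      proof (intro exI allI impI)
        fix k :: nat assume "1 \<le> k"
        then have "0 < s k" using seq_suble[OF s, of k] by simp
        then show "(\<Sum>z\<in>UNIV. Aavg x (s k) z) = 1" by (rule Aavg_sum)
      qed
      then have B: "(\<lambda>k. \<Sum>z\<in>UNIV. Aavg x (s k) z) \<longlonglongrightarrow> 1"
        by (rule tendsto_eventually)
      show ?thesis using LIMSEQ_unique[OF A B] .
    qed
    have st: "l $ y = (\<Sum>x0\<in>UNIV. l $ x0 * pmf (K x0) y)" for y
    proof -
      have A: "(\<lambda>k. Aavg x (s k) y - (\<Sum>x0\<in>UNIV. Aavg x (s k) x0 * pmf (K x0) y)) \<longlonglongrightarrow> 0"
        using LIMSEQ_subseq_LIMSEQ[OF step3 s] by (simp add: o_def)
      have B: "(\<lambda>k. Aavg x (s k) y - (\<Sum>x0\<in>UNIV. Aavg x (s k) x0 * pmf (K x0) y)) \<longlonglongrightarrow>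
          l $ y - (\<Sum>x0\<in>UNIV. l $ x0 * pmf (K x0) y)"
        by (intro tendsto_diff tendsto_sum tendsto_mult_right limc)
      show ?thesis using LIMSEQ_unique[OF B A] by simp
    qed
    have "l $ z = pmf \<xi> z" for z
      by (rule stationary_limit[of "\<lambda>z. l $ z", OF nn s1 st])
    then have "l = \<xi>v" unfolding \<xi>v_def by (simp add: vec_eq_iff)
    then have lim': "(\<lambda>k. a (s k)) \<longlonglongrightarrow> \<xi>v" using lim unfolding s_def comp_def by simp
    have "(\<lambda>k. dist (a (s k)) \<xi>v) \<longlonglongrightarrow> dist \<xi>v \<xi>v"
      by (intro tendsto_dist lim' tendsto_const)
    then have "(\<lambda>k. dist (a (s k)) \<xi>v) \<longlonglongrightarrow> 0" by simp
    moreover have "r \<le> dist (a (s k)) \<xi>v" for k unfolding s_def using r0(2) by simp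
    ultimately have "r \<le> 0" by (intro LIMSEQ_le_const) auto
    then show False using r by simp
  qed
  from tendsto_vec_nth[OF this, of y] show ?thesis unfolding a_def \<xi>v_def by simp
qed

lemma step5: "(\<lambda>n. Bavg x n x0 y0) \<longlonglongrightarrow> pmf \<xi> x0 * pmf (K x0) y0"
proof -
  have "(\<lambda>n. (Bavg x n x0 y0 - Aavg x n x0 * pmf (K x0) y0) + Aavg x n x0 * pmf (K x0) y0) \<longlonglongrightarrow> 0 + pmf \<xi> x0 * pmf (K x0) y0"
    by (intro tendsto_add step1 tendsto_mult_right step4)
  then show ?thesis by simp
qed

lemma ergodic_pairs:
  fixes h :: "'x \<Rightarrow> 'x \<Rightarrow> real"
  shows "(\<lambda>n. (\<Sum>\<tau><n. h (x \<tau>) (x (Suc \<tau>))) / n) \<longlonglongrightarrow> (\<Sum>x0\<in>UNIV. \<Sum>y0\<in>UNIV. pmf \<xi> x0 * pmf (K x0) y0 * h x0 y0)"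
proof -
  have eq: "(\<Sum>\<tau><n. h (x \<tau>) (x (Suc \<tau>))) / n = (\<Sum>x0\<in>UNIV. \<Sum>y0\<in>UNIV. Bavg x n x0 y0 * h x0 y0)" for n
  proof -
    have "(\<Sum>\<tau><n. h (x \<tau>) (x (Suc \<tau>))) =
        (\<Sum>\<tau><n. \<Sum>x0\<in>UNIV. \<Sum>y0\<in>UNIV. (if x \<tau> = x0 \<and> x (Suc \<tau>) = y0 then 1 else 0) * h x0 y0)"
    proof (rule sum.cong[OF refl])
      fix \<tau>
      have pw: "(if x \<tau> = x0 \<and> x (Suc \<tau>) = y0 then 1 else 0) * h x0 y0 =
          (if x0 = x \<tau> \<and> y0 = x (Suc \<tau>) then h x0 y0 else 0)" for x0 y0
        by auto
      show "h (x \<tau>) (x (Suc \<tau>)) = (\<Sum>x0\<in>UNIV. \<Sum>y0\<in>UNIV. (if x \<tau> = x0 \<and> x (Suc \<tau>) = y0 then 1 else 0) * h x0 y0)"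
        unfolding pw by (rule dd[symmetric])
    qed
    also have "\<dots> = (\<Sum>x0\<in>UNIV. \<Sum>y0\<in>UNIV. \<Sum>\<tau><n. (if x \<tau> = x0 \<and> x (Suc \<tau>) = y0 then 1 else 0) * h x0 y0)"
      by (simp add: sum.swap[of _ "{..<n}"])
    also have "\<dots> = (\<Sum>x0\<in>UNIV. \<Sum>y0\<in>UNIV. (\<Sum>\<tau><n. (if x \<tau> = x0 \<and> x (Suc \<tau>) = y0 then 1 else 0)) * h x0 y0)"
      by (simp only: sum_distrib_right)
    finally have "(\<Sum>\<tau><n. h (x \<tau>) (x (Suc \<tau>))) / n = (\<Sum>x0\<in>UNIV. \<Sum>y0\<in>UNIV. (\<Sum>\<tau><n. (if x \<tau> = x0 \<and> x (Suc \<tau>) = y0 then 1 else 0)) * h x0 y0) / n"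
      by simp
    also have "\<dots> = (\<Sum>x0\<in>UNIV. \<Sum>y0\<in>UNIV. (\<Sum>\<tau><n. (if x \<tau> = x0 \<and> x (Suc \<tau>) = y0 then 1 else 0)) * h x0 y0 / n)"
      by (simp only: sum_divide_distrib)
    also have "\<dots> = (\<Sum>x0\<in>UNIV. \<Sum>y0\<in>UNIV. Bavg x n x0 y0 * h x0 y0)"
      unfolding Bavg_def by (simp only: times_divide_eq_left)
    finally show ?thesis .
  qed
  show ?thesis unfolding eq
    by (intro tendsto_sum tendsto_mult_right step5)
qed

end

definition vv :: "(nat \<Rightarrow> 's \<times> 'y \<times> 'z \<times> 'a) \<Rightarrow> nat \<Rightarrow> 'z \<Rightarrow> 'a \<Rightarrow> real" where
  "vv x \<tau> z a = (if trZ x \<tau> = z \<and> trA x \<tau> = a then 1 else 0)"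

definition NN :: "(nat \<Rightarrow> 's \<times> 'y \<times> 'z \<times> 'a) \<Rightarrow> nat \<Rightarrow> 'z \<Rightarrow> 'a \<Rightarrow> real" where
  "NN x t z a = (\<Sum>\<tau><t. vv x \<tau> z a)"

lemma vv_01: "vv x \<tau> z a = 0 \<or> vv x \<tau> z a = 1" unfolding vv_def by auto
lemma vv_nonneg: "0 \<le> vv x \<tau> z a" unfolding vv_def by auto
lemma NN_nonneg: "0 \<le> NN x t z a" unfolding NN_def by (intro sum_nonneg vv_nonneg)
lemma NN_Suc: "NN x (Suc t) z a = NN x t z a + vv x t z a" unfolding NN_def by simp

lemma lrate_eq: "lrate x t z a = vv x t z a / (1 + NN x (Suc t) z a)"
proof -
  have "{0..t} = {..<Suc t}" by auto
  then show ?thesis unfolding lrate_def vv_def NN_def by simp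
qed

lemma maxq_ge: "Q z a \<le> max_q (Q :: 'z \<Rightarrow> 'a::finite \<Rightarrow> real) z"
  unfolding max_q_def by (rule Max_ge) auto

lemma maxq_ex: "\<exists>a. max_q (Q :: 'z \<Rightarrow> 'a::finite \<Rightarrow> real) z = Q z a"
proof -
  have "Max (range (Q z)) \<in> range (Q z)" by (rule Max_in) auto
  then obtain a where "Max (range (Q z)) = Q z a" by blast
  then show ?thesis unfolding max_q_def by blast
qed

lemma maxq_diff:
  fixes Q Q' :: "'z \<Rightarrow> 'a::finite \<Rightarrow> real"
  assumes "\<And>a. \<bar>Q z a - Q' z a\<bar> \<le> D"
  shows "\<bar>max_q Q z - max_q Q' z\<bar> \<le> D"
proof -
  obtain a1 where a1: "max_q Q z = Q z a1" using maxq_ex[of Q z] by blast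
  obtain a2 where a2: "max_q Q' z = Q' z a2" using maxq_ex[of Q' z] by blast
  have "Q z a1 \<le> Q' z a1 + D" using assms[of a1] by simp
  also have "Q' z a1 \<le> max_q Q' z" by (rule maxq_ge)
  finally have 1: "max_q Q z \<le> max_q Q' z + D" using a1 by simp
  have "Q' z a2 \<le> Q z a2 + D" using assms[of a2] by simp
  also have "Q z a2 \<le> max_q Q z" by (rule maxq_ge)
  finally have 2: "max_q Q' z \<le> max_q Q z + D" using a2 by simp
  show ?thesis using 1 2 by simp
qed

lemma maxq_abs:
  fixes Q :: "'z \<Rightarrow> 'a::finite \<Rightarrow> real"
  assumes "\<And>a. \<bar>Q z a\<bar> \<le> B"
  shows "\<bar>max_q Q z\<bar> \<le> B"
  using maxq_diff[of "Q" z "\<lambda>_ _. 0" B] assms by (simp add: max_q_def)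

lemma Q_rep:
  "(1 + NN x t z a) * qlearn r \<gamma> Q0 x t z a = Q0 z a +
     (\<Sum>\<tau><t. vv x \<tau> z a * (r (trS x \<tau>) (trA x \<tau>) + \<gamma> * max_q (qlearn r \<gamma> Q0 x \<tau>) (trZ x (Suc \<tau>))))"
proof (induction t)
  case 0
  then show ?case by (simp add: NN_def)
next
  case (Suc t)
  let ?Q = "qlearn r \<gamma> Q0 x t z a"
  let ?T = "r (trS x t) (trA x t) + \<gamma> * max_q (qlearn r \<gamma> Q0 x t) (trZ x (Suc t))"
  have q: "qlearn r \<gamma> Q0 x (Suc t) z a = ?Q + lrate x t z a * (?T - ?Q)"
    by (simp add: Let_def)
  have "(1 + NN x (Suc t) z a) * qlearn r \<gamma> Q0 x (Suc t) z a = (1 + NN x t z a) * ?Q + vv x t z a * ?T"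
  proof (cases "vv x t z a = 0")
    case True
    then show ?thesis unfolding q lrate_eq by (simp add: NN_Suc)
  next
    case False
    then have v1: "vv x t z a = 1" using vv_01[of x t z a] by blast
    have pos: "1 + NN x (Suc t) z a \<noteq> 0" using NN_nonneg[of x "Suc t" z a] by simp
    show ?thesis unfolding q lrate_eq using pos v1
      by (simp add: NN_Suc field_simps)
  qed
  then show ?case using Suc.IH by simp
qed

lemma Q_bound:
  assumes g0: "0 \<le> \<gamma>" and g1: "\<gamma> < 1"
    and B0: "\<And>z a. \<bar>Q0 z a\<bar> \<le> B" and Br: "\<And>s a. \<bar>r s a\<bar> \<le> (1 - \<gamma>) * B"
  shows "\<bar>qlearn r \<gamma> Q0 x t z a\<bar> \<le> B"
proof (induction t arbitrary: z a)
  case 0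
  then show ?case using B0 by simp
next
  case (Suc t)
  let ?Q = "qlearn r \<gamma> Q0 x t z a"
  let ?T = "r (trS x t) (trA x t) + \<gamma> * max_q (qlearn r \<gamma> Q0 x t) (trZ x (Suc t))"
  let ?\<alpha> = "lrate x t z a"
  have q: "qlearn r \<gamma> Q0 x (Suc t) z a = (1 - ?\<alpha>) * ?Q + ?\<alpha> * ?T"
    by (simp add: Let_def algebra_simps)
  have a0: "0 \<le> ?\<alpha>" unfolding lrate_eq by (intro divide_nonneg_nonneg vv_nonneg) (use NN_nonneg[of x "Suc t" z a] in simp)
  have a1: "?\<alpha> \<le> 1"
  proof -
    have "vv x t z a \<le> 1 + NN x (Suc t) z a" using vv_01[of x t z a] NN_nonneg[of x "Suc t" z a] by auto
    then show ?thesis unfolding lrate_eq using NN_nonneg[of x "Suc t" z a] by (simp add: divide_le_eq)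
  qed
  have "\<bar>max_q (qlearn r \<gamma> Q0 x t) (trZ x (Suc t))\<bar> \<le> B" by (rule maxq_abs) (rule Suc.IH)
  then have "\<bar>\<gamma> * max_q (qlearn r \<gamma> Q0 x t) (trZ x (Suc t))\<bar> \<le> \<gamma> * B"
    using g0 by (simp add: abs_mult mult_left_mono)
  then have T: "\<bar>?T\<bar> \<le> B" using Br[of "trS x t" "trA x t"] by (simp add: algebra_simps)
  have "\<bar>(1 - ?\<alpha>) * ?Q + ?\<alpha> * ?T\<bar> \<le> (1 - ?\<alpha>) * \<bar>?Q\<bar> + ?\<alpha> * \<bar>?T\<bar>"
  proof -
    have "\<bar>(1 - ?\<alpha>) * ?Q + ?\<alpha> * ?T\<bar> \<le> \<bar>(1 - ?\<alpha>) * ?Q\<bar> + \<bar>?\<alpha> * ?T\<bar>" by (rule abs_triangle_ineq)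
    also have "\<bar>(1 - ?\<alpha>) * ?Q\<bar> = (1 - ?\<alpha>) * \<bar>?Q\<bar>" using a1 by (simp add: abs_mult)
    also have "\<bar>?\<alpha> * ?T\<bar> = ?\<alpha> * \<bar>?T\<bar>" using a0 by (simp add: abs_mult)
    finally show ?thesis .
  qed
  also have "\<dots> \<le> (1 - ?\<alpha>) * B + ?\<alpha> * B"
    by (intro add_mono mult_left_mono Suc.IH T) (use a0 a1 in auto)
  finally show ?case unfolding q by (simp add: algebra_simps)
qed

lemma ident_alg:
  fixes n :: real assumes "n \<noteq> 0"
  shows "(A + B + g * F + g * S1) / n - (rx + g * S2) = ((A + B) / n - rx) + g * (S1 / n - S2) + g * (F / n)"
  using assms by (simp add: field_simps)

lemma tri3:
  fixes a b d g :: real assumes "0 \<le> g"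
  shows "\<bar>a + g * b + g * d\<bar> \<le> \<bar>a\<bar> + g * \<bar>b\<bar> + g * \<bar>d\<bar>"
proof -
  have "\<bar>a + g * b + g * d\<bar> \<le> \<bar>a + g * b\<bar> + \<bar>g * d\<bar>" by (rule abs_triangle_ineq)
  also have "\<bar>a + g * b\<bar> \<le> \<bar>a\<bar> + \<bar>g * b\<bar>" by (rule abs_triangle_ineq)
  finally show ?thesis using assms by (simp add: abs_mult)
qed

lemma tendsto0_abs_ev:
  fixes X :: "nat \<Rightarrow> real"
  assumes "X \<longlonglongrightarrow> 0" "0 < e"
  shows "eventually (\<lambda>t. \<bar>X t\<bar> < e) sequentially"
  using assms unfolding tendsto_iff dist_real_def by simp

context
  fixes x :: "nat \<Rightarrow> 's \<times> 'y \<times> 'z::finite \<times> 'a::finite"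
    and r :: "'s \<Rightarrow> 'a \<Rightarrow> real" and \<gamma> :: real and Q0 Qs rx c :: "'z \<Rightarrow> 'a \<Rightarrow> real"
    and Px :: "'z \<Rightarrow> 'z \<Rightarrow> 'a \<Rightarrow> real"
  assumes g0: "0 \<le> \<gamma>" and g1: "\<gamma> < 1"
    and fixQ: "\<And>z a. Qs z a = rx z a + \<gamma> * (\<Sum>z'\<in>UNIV. Px z' z a * max_q Qs z')"
    and H1: "\<And>z a. (\<lambda>t. NN x t z a / t) \<longlonglongrightarrow> c z a"
    and cpos: "\<And>z a. 0 < c z a"
    and H2: "\<And>z a. (\<lambda>t. (\<Sum>\<tau><t. vv x \<tau> z a * r (trS x \<tau>) (trA x \<tau>)) / t) \<longlonglongrightarrow> c z a * rx z a"
    and H3: "\<And>z a z'. (\<lambda>t. (\<Sum>\<tau><t. vv x \<tau> z a * (if trZ x (Suc \<tau>) = z' then 1 else 0)) / t) \<longlonglongrightarrow> c z a * Px z' z a"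
begin

lemma ratio:
  assumes "(\<lambda>t. Y t / t) \<longlonglongrightarrow> L"
  shows "(\<lambda>t. Y t / (1 + NN x t z a)) \<longlonglongrightarrow> L / c z a"
proof -
  have d: "(\<lambda>t. 1 / real t + NN x t z a / t) \<longlonglongrightarrow> 0 + c z a"
    by (intro tendsto_add lim_inverse_n' H1)
  have "(\<lambda>t. (Y t / t) / (1 / real t + NN x t z a / t)) \<longlonglongrightarrow> L / (0 + c z a)"
    by (rule tendsto_divide[OF assms d]) (use cpos[of z a] in simp)
  moreover have "eventually (\<lambda>t. (Y t / t) / (1 / real t + NN x t z a / t) = Y t / (1 + NN x t z a)) sequentially"
    unfolding eventually_sequentially
  proof (intro exI allI impI)
    fix t :: nat assume "1 \<le> t"
    then have t: "real t \<noteq> 0" by simp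
    have "1 / real t + NN x t z a / t = (1 + NN x t z a) / t" by (simp add: add_divide_distrib)
    then show "(Y t / t) / (1 / real t + NN x t z a / t) = Y t / (1 + NN x t z a)" using t by simp
  qed
  ultimately show ?thesis by (simp add: Lim_transform_eventually)
qed

lemma ratio0: "(\<lambda>t. K / (1 + NN x t z a)) \<longlonglongrightarrow> 0"
  using ratio[of "\<lambda>_. K" 0 z a] lim_const_over_n[of K] by simp

abbreviation "QQ t \<equiv> qlearn r \<gamma> Q0 x t"

lemma step_za:
  assumes D0: "0 \<le> D" and HD: "\<And>\<tau> z a. \<tau> \<ge> T0 \<Longrightarrow> \<bar>QQ \<tau> z a - Qs z a\<bar> \<le> D" and dl: "0 < \<delta>"
  shows "eventually (\<lambda>t. \<bar>QQ t z a - Qs z a\<bar> \<le> \<gamma> * D + \<delta>) sequentially"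
proof -
  define N where "N t = NN x t z a" for t
  define w where "w \<tau> = vv x \<tau> z a" for \<tau>
  define R where "R t = (\<Sum>\<tau><t. w \<tau> * r (trS x \<tau>) (trA x \<tau>))" for t
  define C where "C t z' = (\<Sum>\<tau><t. w \<tau> * (if trZ x (Suc \<tau>) = z' then 1 else 0))" for t z'
  define Ms where "Ms = max_q Qs"
  define f where "f \<tau> = w \<tau> * (max_q (QQ \<tau>) (trZ x (Suc \<tau>)) - Ms (trZ x (Suc \<tau>)))" for \<tau>
  define F where "F t = (\<Sum>\<tau><t. f \<tau>)" for t
  define K0 where "K0 = (\<Sum>\<tau><T0. \<bar>f \<tau>\<bar>)"
  define E1 where "E1 t = (Q0 z a + R t) / (1 + N t) - rx z a" for t
  define E3 where "E3 t = (\<Sum>z'\<in>UNIV. Ms z' * (C t z' / (1 + N t) - Px z' z a))" for t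
  have Npos: "0 < 1 + N t" for t unfolding N_def using NN_nonneg[of x t z a] by simp
  have swap: "(\<Sum>\<tau><t. w \<tau> * Ms (trZ x (Suc \<tau>))) = (\<Sum>z'\<in>UNIV. Ms z' * C t z')" for t
  proof -
    have "(\<Sum>z'\<in>UNIV. Ms z' * C t z') = (\<Sum>z'\<in>UNIV. \<Sum>\<tau><t. w \<tau> * (if trZ x (Suc \<tau>) = z' then Ms z' else 0))"
      unfolding C_def by (simp add: sum_distrib_left mult_ac if_distrib cong: if_cong)
    also have "\<dots> = (\<Sum>\<tau><t. \<Sum>z'\<in>UNIV. w \<tau> * (if trZ x (Suc \<tau>) = z' then Ms z' else 0))"
      by (rule sum.swap)
    also have "\<dots> = (\<Sum>\<tau><t. w \<tau> * Ms (trZ x (Suc \<tau>)))"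
      by (simp add: sum_distrib_left[symmetric] sum.delta)
    finally show ?thesis by simp
  qed
  have ident: "QQ t z a - Qs z a = E1 t + \<gamma> * E3 t + \<gamma> * (F t / (1 + N t))" for t
  proof -
    have pw: "w \<tau> * (r (trS x \<tau>) (trA x \<tau>) + \<gamma> * max_q (QQ \<tau>) (trZ x (Suc \<tau>))) =
        w \<tau> * r (trS x \<tau>) (trA x \<tau>) + \<gamma> * f \<tau> + \<gamma> * (w \<tau> * Ms (trZ x (Suc \<tau>)))" for \<tau>
      unfolding f_def by (simp add: algebra_simps)
    have "(1 + N t) * QQ t z a = Q0 z a + (R t + \<gamma> * F t + \<gamma> * (\<Sum>z'\<in>UNIV. Ms z' * C t z'))"
      using Q_rep[of x t z a r \<gamma> Q0] unfolding N_def[symmetric] w_def[symmetric] pw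
      by (simp add: sum.distrib sum_distrib_left[symmetric] R_def F_def swap)
    then have Qt: "QQ t z a = (Q0 z a + R t + \<gamma> * F t + \<gamma> * (\<Sum>z'\<in>UNIV. Ms z' * C t z')) / (1 + N t)"
      using Npos[of t] by (simp add: field_simps)
    have E3': "E3 t = (\<Sum>z'\<in>UNIV. Ms z' * C t z') / (1 + N t) - (\<Sum>z'\<in>UNIV. Px z' z a * Ms z')"
      unfolding E3_def by (simp add: right_diff_distrib sum_subtractf sum_divide_distrib mult_ac)
    have "(\<Sum>z'\<in>UNIV. Px z' z a * max_q Qs z') = (\<Sum>z'\<in>UNIV. Px z' z a * Ms z')" unfolding Ms_def ..
    then have qs: "Qs z a = rx z a + \<gamma> * (\<Sum>z'\<in>UNIV. Px z' z a * Ms z')" using fixQ[of z a] by simp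
    show ?thesis unfolding Qt E3' E1_def qs
      by (rule ident_alg) (use Npos[of t] in simp)
  qed
  have lE1: "E1 \<longlonglongrightarrow> 0"
  proof -
    have "(\<lambda>t. Q0 z a / (1 + N t) + R t / (1 + N t) - rx z a) \<longlonglongrightarrow> 0 + (c z a * rx z a) / c z a - rx z a"
      unfolding N_def R_def w_def
      by (intro tendsto_diff tendsto_add ratio0 ratio H2 tendsto_const)
    then show ?thesis unfolding E1_def using cpos[of z a] by (simp add: add_divide_distrib)
  qed
  have lE3: "E3 \<longlonglongrightarrow> 0"
  proof -
    have "E3 \<longlonglongrightarrow> (\<Sum>z'\<in>UNIV. Ms z' * ((c z a * Px z' z a) / c z a - Px z' z a))"
      unfolding E3_def N_def C_def w_def
      by (intro tendsto_sum tendsto_mult tendsto_const tendsto_diff ratio H3)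
    then show ?thesis using cpos[of z a] by simp
  qed
  have lK: "(\<lambda>t. K0 / (1 + N t)) \<longlonglongrightarrow> 0" unfolding N_def by (rule ratio0)
  have Fb: "\<bar>F t\<bar> \<le> K0 + D * N t" for t
  proof -
    have "\<bar>F t\<bar> \<le> (\<Sum>\<tau><t. \<bar>f \<tau>\<bar>)" unfolding F_def by (rule sum_abs)
    also have "\<dots> \<le> (\<Sum>\<tau><t. (if \<tau> \<in> {..<T0} then \<bar>f \<tau>\<bar> else 0) + D * w \<tau>)"
    proof (rule sum_mono)
      fix \<tau>
      have w0: "0 \<le> w \<tau>" unfolding w_def by (rule vv_nonneg)
      show "\<bar>f \<tau>\<bar> \<le> (if \<tau> \<in> {..<T0} then \<bar>f \<tau>\<bar> else 0) + D * w \<tau>"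
      proof (cases "\<tau> < T0")
        case True then show ?thesis using w0 D0 by simp
      next
        case False
        then have "\<bar>max_q (QQ \<tau>) (trZ x (Suc \<tau>)) - Ms (trZ x (Suc \<tau>))\<bar> \<le> D"
          unfolding Ms_def by (intro maxq_diff HD) simp
        then have "\<bar>f \<tau>\<bar> \<le> w \<tau> * D" unfolding f_def using w0
          by (simp add: abs_mult mult_left_mono)
        then show ?thesis using False by (simp add: mult.commute)
      qed
    qed
    also have "\<dots> = (\<Sum>\<tau>\<in>{..<t} \<inter> {..<T0}. \<bar>f \<tau>\<bar>) + D * N t"
      unfolding N_def NN_def w_def by (simp add: sum.distrib sum_distrib_left sum.inter_restrict)
    also have "(\<Sum>\<tau>\<in>{..<t} \<inter> {..<T0}. \<bar>f \<tau>\<bar>) \<le> K0"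
      unfolding K0_def by (rule sum_mono2) auto
    finally show ?thesis by simp
  qed
  have E2b: "\<bar>F t / (1 + N t)\<bar> \<le> K0 / (1 + N t) + D" for t
  proof -
    have N0: "0 \<le> N t" unfolding N_def by (rule NN_nonneg)
    have "\<bar>F t / (1 + N t)\<bar> = \<bar>F t\<bar> / (1 + N t)" using Npos[of t] by simp
    also have "\<dots> \<le> (K0 + D * N t) / (1 + N t)" by (rule divide_right_mono[OF Fb]) (use Npos[of t] in simp)
    also have "\<dots> = K0 / (1 + N t) + D * (N t / (1 + N t))" by (simp add: add_divide_distrib)
    also have "D * (N t / (1 + N t)) \<le> D * 1"
      by (rule mult_left_mono) (use Npos[of t] N0 D0 in \<open>simp_all add: divide_le_eq\<close>)
    finally show ?thesis by simp
  qed
  have d3: "0 < \<delta> / 3" using dl by simp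
  show ?thesis
    using tendsto0_abs_ev[OF lE1 d3] tendsto0_abs_ev[OF lE3 d3] tendsto0_abs_ev[OF lK d3]
  proof eventually_elim
    case (elim t)
    have K0n: "0 \<le> K0" unfolding K0_def by (rule sum_nonneg) simp
    have kt: "0 \<le> K0 / (1 + N t)" using K0n Npos[of t] by simp
    have g3: "\<gamma> * \<bar>E3 t\<bar> \<le> \<bar>E3 t\<bar>" using g0 g1 by (intro mult_left_le_one_le) auto
    have "\<gamma> * \<bar>F t / (1 + N t)\<bar> \<le> \<gamma> * (K0 / (1 + N t) + D)" by (rule mult_left_mono[OF E2b g0])
    then have g2: "\<gamma> * \<bar>F t / (1 + N t)\<bar> \<le> \<gamma> * (K0 / (1 + N t)) + \<gamma> * D" by (simp add: distrib_left)
    have g2': "\<gamma> * (K0 / (1 + N t)) \<le> K0 / (1 + N t)" using g0 g1 kt by (intro mult_left_le_one_le) auto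
    have "\<bar>QQ t z a - Qs z a\<bar> \<le> \<bar>E1 t\<bar> + \<gamma> * \<bar>E3 t\<bar> + \<gamma> * \<bar>F t / (1 + N t)\<bar>"
      unfolding ident by (rule tri3[OF g0])
    moreover have "K0 / (1 + N t) \<le> \<bar>K0 / (1 + N t)\<bar>" by (rule abs_ge_self)
    ultimately show ?case using elim g3 g2 g2' by linarith
  qed
qed

lemma step_all:
  assumes D0: "0 \<le> D" and HD: "\<And>\<tau> z a. \<tau> \<ge> T0 \<Longrightarrow> \<bar>QQ \<tau> z a - Qs z a\<bar> \<le> D" and dl: "0 < \<delta>"
  shows "\<exists>T. \<forall>\<tau>\<ge>T. \<forall>z a. \<bar>QQ \<tau> z a - Qs z a\<bar> \<le> \<gamma> * D + \<delta>"
proof -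
  have "eventually (\<lambda>t. \<forall>z. \<forall>a. \<bar>QQ t z a - Qs z a\<bar> \<le> \<gamma> * D + \<delta>) sequentially"
    by (intro eventually_all_finite step_za[OF D0 HD dl])
  then show ?thesis unfolding eventually_sequentially by blast
qed

lemma Qconv:
  assumes rb: "\<And>s a. \<bar>r s a\<bar> \<le> Br"
  shows "(\<lambda>t. QQ t z a) \<longlonglongrightarrow> Qs z a"
proof -
  have Br0: "0 \<le> Br" using rb[of undefined undefined] by simp
  have g1': "0 < 1 - \<gamma>" using g1 by simp
  define S0 where "S0 = (\<Sum>z\<in>UNIV. \<Sum>a\<in>UNIV. \<bar>Q0 z a\<bar>)"
  define B where "B = S0 + Br / (1 - \<gamma>)"
  have S0le: "\<bar>Q0 z a\<bar> \<le> S0" for z a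
  proof -
    have "\<bar>Q0 z a\<bar> \<le> (\<Sum>a\<in>UNIV. \<bar>Q0 z a\<bar>)" by (rule member_le_sum) auto
    also have "\<dots> \<le> S0" unfolding S0_def by (rule member_le_sum) (auto intro: sum_nonneg)
    finally show ?thesis .
  qed
  have S0n: "0 \<le> S0" using S0le[of undefined undefined] by simp
  have "0 \<le> Br / (1 - \<gamma>)" using Br0 g1' by simp
  then have B0: "\<bar>Q0 z a\<bar> \<le> B" for z a using S0le[of z a] unfolding B_def by linarith
  have BR: "\<bar>r s a\<bar> \<le> (1 - \<gamma>) * B" for s a
  proof -
    have "(1 - \<gamma>) * B = (1 - \<gamma>) * S0 + (1 - \<gamma>) * (Br / (1 - \<gamma>))" unfolding B_def by (simp add: distrib_left)
    also have "(1 - \<gamma>) * (Br / (1 - \<gamma>)) = Br" using g1' by simp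
    finally have "(1 - \<gamma>) * B = (1 - \<gamma>) * S0 + Br" .
    moreover have "0 \<le> (1 - \<gamma>) * S0" using g1' S0n by simp
    ultimately show ?thesis using rb[of s a] by simp
  qed
  have QB: "\<bar>QQ t z a\<bar> \<le> B" for t z a by (rule Q_bound[OF g0 g1 B0 BR])
  define S1 where "S1 = (\<Sum>z\<in>UNIV. \<Sum>a\<in>UNIV. \<bar>Qs z a\<bar>)"
  have S1le: "\<bar>Qs z a\<bar> \<le> S1" for z a
  proof -
    have "\<bar>Qs z a\<bar> \<le> (\<Sum>a\<in>UNIV. \<bar>Qs z a\<bar>)" by (rule member_le_sum) auto
    also have "\<dots> \<le> S1" unfolding S1_def by (rule member_le_sum) (auto intro: sum_nonneg)
    finally show ?thesis .
  qed
  define D0 where "D0 = B + S1"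
  have HD0: "\<bar>QQ \<tau> z a - Qs z a\<bar> \<le> D0" for \<tau> z a
    using QB[of \<tau> z a] S1le[of z a] unfolding D0_def by simp
  have D0n: "0 \<le> D0" using HD0[of 0 undefined undefined] by simp
  have iter: "\<exists>T. \<forall>\<tau>\<ge>T. \<forall>z a. \<bar>QQ \<tau> z a - Qs z a\<bar> \<le> \<gamma>^k * D0 + e" if e: "0 < e" for k e
  proof (induction k)
    case 0
    show ?case using HD0 e by (intro exI[of _ 0]) (auto intro: order_trans[OF HD0])
  next
    case (Suc k)
    then obtain T where T: "\<forall>\<tau>\<ge>T. \<forall>z a. \<bar>QQ \<tau> z a - Qs z a\<bar> \<le> \<gamma>^k * D0 + e" by blast
    have Dn: "0 \<le> \<gamma>^k * D0 + e" using g0 D0n e by simp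
    have dl: "0 < (1 - \<gamma>) * e" using g1' e by simp
    from step_all[OF Dn _ dl, of T] T
    obtain T' where "\<forall>\<tau>\<ge>T'. \<forall>z a. \<bar>QQ \<tau> z a - Qs z a\<bar> \<le> \<gamma> * (\<gamma>^k * D0 + e) + (1 - \<gamma>) * e"
      by blast
    moreover have "\<gamma> * (\<gamma>^k * D0 + e) + (1 - \<gamma>) * e = \<gamma>^Suc k * D0 + e" by (simp add: algebra_simps)
    ultimately show ?case by auto
  qed
  show ?thesis
  proof (rule LIMSEQ_I)
    fix \<epsilon> :: real assume ep: "0 < \<epsilon>"
    have "(\<lambda>k. \<gamma>^k * D0) \<longlonglongrightarrow> 0 * D0" by (intro tendsto_mult LIMSEQ_realpow_zero g0 g1 tendsto_const)
    then have "eventually (\<lambda>k. \<bar>\<gamma>^k * D0\<bar> < \<epsilon> / 2) sequentially"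
      by (intro tendsto0_abs_ev) (use ep in simp_all)
    then obtain k where k: "\<bar>\<gamma>^k * D0\<bar> < \<epsilon> / 2" unfolding eventually_sequentially by blast
    obtain T where T: "\<forall>\<tau>\<ge>T. \<forall>z a. \<bar>QQ \<tau> z a - Qs z a\<bar> \<le> \<gamma>^k * D0 + \<epsilon> / 2"
      using iter[of "\<epsilon> / 2" k] ep by auto
    show "\<exists>no. \<forall>n\<ge>no. norm (QQ n z a - Qs z a) < \<epsilon>"
    proof (intro exI[of _ T] allI impI)
      fix n assume "T \<le> n"
      then have "\<bar>QQ n z a - Qs z a\<bar> \<le> \<gamma>^k * D0 + \<epsilon> / 2" using T by blast
      moreover have "\<gamma>^k * D0 \<le> \<bar>\<gamma>^k * D0\<bar>" by (rule abs_ge_self)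
      ultimately show "norm (QQ n z a - Qs z a) < \<epsilon>" using k by simp
    qed
  qed
qed

end

lemma sum_pmf_integral:
  fixes \<mu> :: "'c::finite pmf"
  shows "(\<Sum>q\<in>UNIV. pmf \<mu> q * g q) = measure_pmf.expectation \<mu> g"
  by (subst integral_measure_pmf_real[of UNIV]) (auto simp: mult.commute)

lemma sum_map_pmf:
  fixes p :: "'b::finite pmf" and h :: "'b \<Rightarrow> 'c::finite"
  shows "(\<Sum>q\<in>UNIV. pmf (map_pmf h p) q * g q) = (\<Sum>v\<in>UNIV. pmf p v * g (h v))"
  by (simp add: sum_pmf_integral)

lemma sum_bind_pmf:
  fixes N :: "'b::finite pmf" and F :: "'b \<Rightarrow> 'c::finite pmf"
  shows "(\<Sum>q\<in>UNIV. pmf (bind_pmf N F) q * g q) = (\<Sum>v\<in>UNIV. pmf N v * (\<Sum>q\<in>UNIV. pmf (F v) q * g q))"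
proof -
  have "pmf (bind_pmf N F) q = (\<Sum>v\<in>UNIV. pmf (F v) q * pmf N v)" for q
    unfolding pmf_bind by (rule integral_measure_pmf_real) auto
  then have "(\<Sum>q\<in>UNIV. pmf (bind_pmf N F) q * g q) = (\<Sum>q\<in>UNIV. \<Sum>v\<in>UNIV. pmf N v * (pmf (F v) q * g q))"
    by (simp add: sum_distrib_right sum_distrib_left mult_ac)
  also have "\<dots> = (\<Sum>v\<in>UNIV. \<Sum>q\<in>UNIV. pmf N v * (pmf (F v) q * g q))" by (rule sum.swap)
  finally show ?thesis by (simp add: sum_distrib_left)
qed

lemma sum_pmf_1: "(\<Sum>q\<in>UNIV. pmf (\<mu>::'c::finite pmf) q) = 1"
  by (rule sum_pmf_eq_1) auto

lemma sum_ck: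
  fixes P :: "'s::finite \<Rightarrow> 'a::finite \<Rightarrow> 's pmf" and Obs :: "'s \<Rightarrow> 'a \<Rightarrow> 'y::finite pmf"
    and f :: "'z::finite \<Rightarrow> 'y \<Rightarrow> 'a \<Rightarrow> 'z" and pol :: "'z \<Rightarrow> 'a pmf"
  shows "(\<Sum>q\<in>UNIV. pmf (chain_kernel P Obs f pol (s, y, z, a)) q * g q) =
    (\<Sum>s'\<in>UNIV. pmf (P s a) s' * (\<Sum>y'\<in>UNIV. pmf (Obs s' a) y' *
       (\<Sum>a'\<in>UNIV. pmf (pol (f z y' a)) a' * g (s', y', f z y' a, a'))))"
  unfolding chain_kernel_def by (simp add: sum_bind_pmf sum_map_pmf)

lemma sum_UNIV4:
  fixes G :: "'s::finite \<times> 'y::finite \<times> 'z::finite \<times> 'a::finite \<Rightarrow> real"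
  shows "(\<Sum>p\<in>UNIV. G p) = (\<Sum>s\<in>UNIV. \<Sum>y\<in>UNIV. \<Sum>z\<in>UNIV. \<Sum>a\<in>UNIV. G (s, y, z, a))"
proof -
  have U: "(UNIV :: ('s \<times> 'y \<times> 'z \<times> 'a) set) = UNIV \<times> (UNIV \<times> (UNIV \<times> UNIV))" by simp
  show ?thesis unfolding U by (simp add: sum.cartesian_product split_def)
qed

lemma sum4:
  fixes g :: "'s::finite \<times> 'y::finite \<times> 'z::finite \<times> 'a::finite \<Rightarrow> real"
  shows "(\<Sum>p\<in>UNIV. if fst (snd (snd p)) = z \<and> snd (snd (snd p)) = a then g p else 0) =
         (\<Sum>s\<in>UNIV. \<Sum>y\<in>UNIV. g (s, y, z, a))"
proof -
  have "(\<Sum>p\<in>UNIV. if fst (snd (snd p)) = z \<and> snd (snd (snd p)) = a then g p else 0) =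
     (\<Sum>s\<in>UNIV. \<Sum>y\<in>UNIV. \<Sum>z'\<in>UNIV. \<Sum>a'\<in>UNIV. if z' = z \<and> a' = a then g (s, y, z', a') else 0)"
    by (subst sum_UNIV4) simp
  also have "\<dots> = (\<Sum>s\<in>UNIV. \<Sum>y\<in>UNIV. g (s, y, z, a))"
    by (rule sum.cong[OF refl], rule sum.cong[OF refl], rule dd)
  finally show ?thesis .
qed

lemma greedy_conv:
  fixes Q :: "nat \<Rightarrow> 'z \<Rightarrow> 'a::finite \<Rightarrow> real" and Qs :: "'z \<Rightarrow> 'a \<Rightarrow> real"
  assumes conv: "\<And>a. (\<lambda>t. Q t z a) \<longlonglongrightarrow> Qs z a"
    and uq: "\<exists>!a. Qs z a = max_q Qs z"
  shows "eventually (\<lambda>t. greedy sel (Q t) z = greedy sel Qs z) sequentially"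
proof -
  obtain a0 where a0: "Qs z a0 = max_q Qs z" and u: "\<And>a. Qs z a = max_q Qs z \<Longrightarrow> a = a0"
    using uq by blast
  have lt: "Qs z a < Qs z a0" if "a \<noteq> a0" for a
    using maxq_ge[of Qs z a] a0 u[of a] that by fastforce
  have setQs: "{a. Qs z a = max_q Qs z} = {a0}" using a0 u by blast
  have ev: "eventually (\<lambda>t. \<forall>a. a \<noteq> a0 \<longrightarrow> Q t z a < Q t z a0) sequentially"
  proof (rule eventually_all_finite)
    fix a
    show "eventually (\<lambda>t. a \<noteq> a0 \<longrightarrow> Q t z a < Q t z a0) sequentially"
    proof (cases "a = a0")
      case False
      have "(\<lambda>t. Q t z a0 - Q t z a) \<longlonglongrightarrow> Qs z a0 - Qs z a" by (intro tendsto_diff conv)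
      moreover have "0 < Qs z a0 - Qs z a" using lt[OF False] by simp
      ultimately have "eventually (\<lambda>t. 0 < Q t z a0 - Q t z a) sequentially" by (rule order_tendstoD)
      then show ?thesis by eventually_elim simp
    qed simp
  qed
  show ?thesis using ev
  proof eventually_elim
    case (elim t)
    obtain a1 where a1: "max_q (Q t) z = Q t z a1" using maxq_ex[of "Q t" z] by blast
    have "a1 = a0"
    proof (rule ccontr)
      assume "a1 \<noteq> a0"
      then have "Q t z a1 < Q t z a0" using elim by blast
      moreover have "Q t z a0 \<le> max_q (Q t) z" by (rule maxq_ge)
      ultimately show False using a1 by simp
    qed
    then have m: "max_q (Q t) z = Q t z a0" using a1 by simp
    have "{a. Q t z a = max_q (Q t) z} = {a0}"
      using elim m by (auto simp: order_less_irrefl)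
    then show ?case unfolding greedy_def setQs by simp
  qed
qed

lemma lim_indep:
  fixes \<xi> :: "'x::finite pmf" and K :: "'x \<Rightarrow> 'x pmf"
  shows "(\<Sum>x0\<in>UNIV. \<Sum>y0\<in>UNIV. pmf \<xi> x0 * pmf (K x0) y0 * h x0) = (\<Sum>x0\<in>UNIV. pmf \<xi> x0 * h x0)"
proof (rule sum.cong[OF refl])
  fix x0
  have "(\<Sum>y0\<in>UNIV. pmf \<xi> x0 * pmf (K x0) y0 * h x0) = pmf \<xi> x0 * h x0 * (\<Sum>y0\<in>UNIV. pmf (K x0) y0)"
    by (simp add: sum_distrib_left mult_ac)
  then show "(\<Sum>y0\<in>UNIV. pmf \<xi> x0 * pmf (K x0) y0 * h x0) = pmf \<xi> x0 * h x0" by (simp add: sum_pmf_1)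
qed

theorem theorem2:
  fixes P :: "'s::finite \<Rightarrow> 'a::finite \<Rightarrow> 's pmf"
    and Obs :: "'s \<Rightarrow> 'a \<Rightarrow> 'y::finite pmf"
    and r :: "'s \<Rightarrow> 'a \<Rightarrow> real"
    and \<gamma> :: real
    and f :: "'z::finite \<Rightarrow> 'y \<Rightarrow> 'a \<Rightarrow> 'z"
    and pol :: "'z \<Rightarrow> 'a pmf"
    and \<xi> :: "('s \<times> 'y \<times> 'z \<times> 'a) pmf"
    and mu0 :: "('s \<times> 'y \<times> 'z \<times> 'a) pmf"
    and M :: "'m measure"
    and X :: "nat \<Rightarrow> 'm \<Rightarrow> 's \<times> 'y \<times> 'z \<times> 'a"
    and Q0 Qs :: "'z \<Rightarrow> 'a \<Rightarrow> real"
    and sel :: "'a set \<Rightarrow> 'a"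
  assumes "0 \<le> \<gamma>" and "\<gamma> < 1"
    and "bind_pmf \<xi> (chain_kernel P Obs f pol) = \<xi>"
    and "\<forall>\<nu>. bind_pmf \<nu> (chain_kernel P Obs f pol) = \<nu> \<longrightarrow> \<nu> = \<xi>"
    and "\<forall>x. pmf \<xi> x > 0"
    and "prob_space M"
    and "\<forall>i. X i \<in> measurable M (count_space UNIV)"
    and "\<forall>n xs. measure M {\<omega> \<in> space M. \<forall>i\<le>n. X i \<omega> = xs i} =
               pmf mu0 (xs 0) * (\<Prod>i<n. pmf (chain_kernel P Obs f pol (xs i)) (xs (Suc i)))"
    and "\<forall>z a. Qs z a = r_xi r \<xi> z a + \<gamma> * (\<Sum>z'\<in>UNIV. P_xi P Obs f \<xi> z' z a * max_q Qs z')"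
    and "\<forall>A. A \<noteq> {} \<longrightarrow> sel A \<in> A"
  shows "AE \<omega> in M.
           (\<forall>z a. (\<lambda>t. qlearn r \<gamma> Q0 (\<lambda>i. X i \<omega>) t z a) \<longlonglongrightarrow> Qs z a) \<and>
           (\<forall>z. (\<exists>!a. Qs z a = max_q Qs z) \<longrightarrow>
              (\<forall>\<^sub>F t in sequentially. greedy sel (qlearn r \<gamma> Q0 (\<lambda>i. X i \<omega>) t) z = greedy sel Qs z))"
proof -
  note g0 = assms(1) and g1 = assms(2) and uniq = assms(4) and xipos = assms(5)
  define K where "K = chain_kernel P Obs f pol"
  have fm: "fmc M X K mu0"
    unfolding fmc_def fmc_axioms_def K_def using assms(6,7,8) by auto
  have AE1: "AE \<omega> in M. \<forall>p\<in>UNIV. (\<lambda>n. fmc.Sm X (psi0 K (fst p) (snd p)) n \<omega> / real n) \<longlonglongrightarrow> 0"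
    by (rule AE_finite_allI) (auto intro: fmc.slln[OF fm] psi0_zero psi0_bound)
  define cc where "cc z a = (\<Sum>s\<in>UNIV. \<Sum>y\<in>UNIV. pmf \<xi> (s, y, z, a))" for z a
  have cpos: "0 < cc z a" for z a
    unfolding cc_def by (intro sum_pos) (use xipos in auto)
  define Br where "Br = (\<Sum>s\<in>UNIV. \<Sum>a\<in>UNIV. \<bar>r s a\<bar>)"
  have rb: "\<bar>r s a\<bar> \<le> Br" for s a
  proof -
    have "\<bar>r s a\<bar> \<le> (\<Sum>a\<in>UNIV. \<bar>r s a\<bar>)" by (rule member_le_sum) auto
    also have "\<dots> \<le> Br" unfolding Br_def by (rule member_le_sum) (auto intro: sum_nonneg)
    finally show ?thesis .
  qed
  show ?thesis
    using AE1
  proof (rule AE_mp, intro AE_I2 impI)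
    fix \<omega> assume w: "\<omega> \<in> space M"
      and H: "\<forall>p\<in>UNIV. (\<lambda>n. fmc.Sm X (psi0 K (fst p) (snd p)) n \<omega> / real n) \<longlonglongrightarrow> 0"
    define x where "x = (\<lambda>i. X i \<omega>)"
    have hyp: "(\<lambda>n. (\<Sum>\<tau><n. psi0 K x0 y0 (x \<tau>) (x (Suc \<tau>))) / real n) \<longlonglongrightarrow> 0" for x0 y0
      using H[rule_format, of "(x0, y0)"] unfolding fmc.Sm_def[OF fm] x_def by simp
    have uniqK: "\<forall>\<nu>. bind_pmf \<nu> K = \<nu> \<longrightarrow> \<nu> = \<xi>" using uniq unfolding K_def .
    note erg = ergodic_pairs[OF uniqK hyp]
    define hz where "hz z a p = (if fst (snd (snd p)) = z \<and> snd (snd (snd p)) = a then 1 else (0::real))"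
      for z a and p :: "'s \<times> 'y \<times> 'z \<times> 'a"
    have vvh: "vv x \<tau> z a = hz z a (x \<tau>)" for \<tau> z a
      unfolding vv_def hz_def trZ_def trA_def by simp
    have H1: "(\<lambda>t. NN x t z a / t) \<longlonglongrightarrow> cc z a" for z a
    proof -
      have "(\<lambda>n. (\<Sum>\<tau><n. (\<lambda>p q. hz z a p) (x \<tau>) (x (Suc \<tau>))) / real n) \<longlonglongrightarrow>
          (\<Sum>x0\<in>UNIV. \<Sum>y0\<in>UNIV. pmf \<xi> x0 * pmf (K x0) y0 * (\<lambda>p q. hz z a p) x0 y0)" by (rule erg)
      also have "(\<Sum>x0\<in>UNIV. \<Sum>y0\<in>UNIV. pmf \<xi> x0 * pmf (K x0) y0 * (\<lambda>p q. hz z a p) x0 y0) = cc z a"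
      proof -
        have "(\<Sum>x0\<in>UNIV. \<Sum>y0\<in>UNIV. pmf \<xi> x0 * pmf (K x0) y0 * (\<lambda>p q. hz z a p) x0 y0) =
            (\<Sum>x0\<in>UNIV. pmf \<xi> x0 * hz z a x0)" by (simp add: lim_indep)
        also have "\<dots> = (\<Sum>p\<in>UNIV. if fst (snd (snd p)) = z \<and> snd (snd (snd p)) = a then pmf \<xi> p else 0)"
          unfolding hz_def by (rule sum.cong) auto
        also have "\<dots> = cc z a" unfolding cc_def by (rule sum4)
        finally show ?thesis .
      qed
      finally show ?thesis unfolding NN_def vvh by simp
    qed
    have H2: "(\<lambda>t. (\<Sum>\<tau><t. vv x \<tau> z a * r (trS x \<tau>) (trA x \<tau>)) / t) \<longlonglongrightarrow> cc z a * r_xi r \<xi> z a" for z a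
    proof -
      let ?h = "\<lambda>p q. hz z a p * r (fst p) (snd (snd (snd p)))"
      have eqs: "vv x \<tau> z a * r (trS x \<tau>) (trA x \<tau>) = ?h (x \<tau>) (x (Suc \<tau>))" for \<tau>
        unfolding vvh trS_def trA_def by simp
      have "(\<lambda>n. (\<Sum>\<tau><n. ?h (x \<tau>) (x (Suc \<tau>))) / real n) \<longlonglongrightarrow>
          (\<Sum>x0\<in>UNIV. \<Sum>y0\<in>UNIV. pmf \<xi> x0 * pmf (K x0) y0 * ?h x0 y0)" by (rule erg)
      also have "(\<Sum>x0\<in>UNIV. \<Sum>y0\<in>UNIV. pmf \<xi> x0 * pmf (K x0) y0 * ?h x0 y0) = cc z a * r_xi r \<xi> z a"
      proof -
        have "(\<Sum>x0\<in>UNIV. \<Sum>y0\<in>UNIV. pmf \<xi> x0 * pmf (K x0) y0 * ?h x0 y0) =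
            (\<Sum>x0\<in>UNIV. pmf \<xi> x0 * (hz z a x0 * r (fst x0) (snd (snd (snd x0)))))"
          by (rule lim_indep)
        also have "\<dots> = (\<Sum>p\<in>UNIV. if fst (snd (snd p)) = z \<and> snd (snd (snd p)) = a then pmf \<xi> p * r (fst p) (snd (snd (snd p))) else 0)"
          unfolding hz_def by (rule sum.cong) auto
        also have "\<dots> = (\<Sum>s\<in>UNIV. \<Sum>y\<in>UNIV. pmf \<xi> (s, y, z, a) * r s a)" by (subst sum4) simp
        also have "\<dots> = cc z a * r_xi r \<xi> z a"
        proof -
          have "cc z a * r_xi r \<xi> z a = (\<Sum>s\<in>UNIV. r s a * (cc z a * cond_s \<xi> s z a))"
            unfolding r_xi_def by (simp add: sum_distrib_left mult_ac)
          also have "\<dots> = (\<Sum>s\<in>UNIV. r s a * (\<Sum>y\<in>UNIV. pmf \<xi> (s, y, z, a)))"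
            unfolding cond_s_def cc_def[symmetric] using cpos[of z a] by simp
          finally show ?thesis by (simp add: sum_distrib_left sum_distrib_right mult_ac)
        qed
        finally show ?thesis .
      qed
      finally show ?thesis unfolding eqs .
    qed
    have H3: "(\<lambda>t. (\<Sum>\<tau><t. vv x \<tau> z a * (if trZ x (Suc \<tau>) = z' then 1 else 0)) / t) \<longlonglongrightarrow> cc z a * P_xi P Obs f \<xi> z' z a"
      for z a z'
    proof -
      let ?h = "\<lambda>p q. hz z a p * (if z' = fst (snd (snd q)) then 1 else (0::real))"
      have eqs: "vv x \<tau> z a * (if trZ x (Suc \<tau>) = z' then 1 else 0) = ?h (x \<tau>) (x (Suc \<tau>))" for \<tau>
        unfolding vvh trZ_def by auto
      define inner where "inner s = (\<Sum>s'\<in>UNIV. pmf (P s a) s' *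
          (\<Sum>y'\<in>UNIV. pmf (Obs s' a) y' * (if z' = f z y' a then 1 else (0::real))))" for s
      have kz: "(\<Sum>y0\<in>UNIV. pmf (K (s, y, z, a)) y0 * (if z' = fst (snd (snd y0)) then 1 else 0)) = inner s" for s y
      proof -
        have "(\<Sum>a'\<in>UNIV. pmf (pol (f z y' a)) a' * (if z' = f z y' a then 1 else (0::real))) =
            (if z' = f z y' a then 1 else 0)" for y'
          by (simp add: sum_distrib_right[symmetric] sum_pmf_1)
        then show ?thesis unfolding K_def inner_def by (simp add: sum_ck)
      qed
      have "(\<lambda>n. (\<Sum>\<tau><n. ?h (x \<tau>) (x (Suc \<tau>))) / real n) \<longlonglongrightarrow>
          (\<Sum>x0\<in>UNIV. \<Sum>y0\<in>UNIV. pmf \<xi> x0 * pmf (K x0) y0 * ?h x0 y0)" by (rule erg)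
      also have "(\<Sum>x0\<in>UNIV. \<Sum>y0\<in>UNIV. pmf \<xi> x0 * pmf (K x0) y0 * ?h x0 y0) = cc z a * P_xi P Obs f \<xi> z' z a"
      proof -
        have "(\<Sum>x0\<in>UNIV. \<Sum>y0\<in>UNIV. pmf \<xi> x0 * pmf (K x0) y0 * ?h x0 y0) =
            (\<Sum>p\<in>UNIV. if fst (snd (snd p)) = z \<and> snd (snd (snd p)) = a then
               pmf \<xi> p * (\<Sum>y0\<in>UNIV. pmf (K p) y0 * (if z' = fst (snd (snd y0)) then 1 else 0)) else 0)"
          unfolding hz_def by (rule sum.cong) (auto simp: sum_distrib_left mult_ac)
        also have "\<dots> = (\<Sum>s\<in>UNIV. \<Sum>y\<in>UNIV. pmf \<xi> (s, y, z, a) *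
               (\<Sum>y0\<in>UNIV. pmf (K (s, y, z, a)) y0 * (if z' = fst (snd (snd y0)) then 1 else 0)))"
          by (rule sum4)
        also have "\<dots> = (\<Sum>s\<in>UNIV. \<Sum>y\<in>UNIV. pmf \<xi> (s, y, z, a) * inner s)" by (simp add: kz)
        also have "\<dots> = cc z a * P_xi P Obs f \<xi> z' z a"
        proof -
          have "cc z a * P_xi P Obs f \<xi> z' z a = (\<Sum>s\<in>UNIV. (cc z a * cond_s \<xi> s z a) * inner s)"
            unfolding P_xi_def inner_def by (simp add: sum_distrib_left mult_ac)
          also have "\<dots> = (\<Sum>s\<in>UNIV. (\<Sum>y\<in>UNIV. pmf \<xi> (s, y, z, a)) * inner s)"
            unfolding cond_s_def cc_def[symmetric] using cpos[of z a] by simp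
          finally show ?thesis by (simp add: sum_distrib_right)
        qed
        finally show ?thesis .
      qed
      finally show ?thesis unfolding eqs .
    qed
    have fixQ: "Qs z a = r_xi r \<xi> z a + \<gamma> * (\<Sum>z'\<in>UNIV. P_xi P Obs f \<xi> z' z a * max_q Qs z')" for z a
      using assms(9) by blast
    have conv: "(\<lambda>t. qlearn r \<gamma> Q0 x t z a) \<longlonglongrightarrow> Qs z a" for z a
      by (rule Qconv[OF g0 g1 fixQ H1 cpos H2 H3 rb])
    show "(\<forall>z a. (\<lambda>t. qlearn r \<gamma> Q0 (\<lambda>i. X i \<omega>) t z a) \<longlonglongrightarrow> Qs z a) \<and>
           (\<forall>z. (\<exists>!a. Qs z a = max_q Qs z) \<longrightarrow>
              (\<forall>\<^sub>F t in sequentially. greedy sel (qlearn r \<gamma> Q0 (\<lambda>i. X i \<omega>) t) z = greedy sel Qs z))"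
      using conv greedy_conv[of "\<lambda>t. qlearn r \<gamma> Q0 x t" _ Qs sel] unfolding x_def by blast
  qed
qed

end
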